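(* Let $(A,\mu,E,\Delta,\epsilon)$ be a regular weak multiplier bialgebra over a field. Then for all $a,b\in A$: (1) if $T_3(a\otimes b)=\sum_i x_i\otimes y_i$ then $\sum_i y_i\,\overline\sqcap^L(x_i)=ba$; (2) if $T_4(a\otimes b)=\sum_i x_i\otimes y_i$ then $\sum_i \overline\sqcap^R(y_i)\,x_i=ba$; (3) if $T_1(a\otimes b)=\sum_i x_i\otimes y_i$ then $\sum_i \sqcap^L(x_i)\,y_i=ab$; (4) if $T_2(a\otimes b)=\sum_i x_i\otimes y_i$ then $\sum_i x_i\,\sqcap^R(y_i)=ab$. (That is, $\mu^{\mathrm{op}}(\overline\sqcap^L\otimes\mathrm{id})T_3=\mu^{\mathrm{op}}$, $\mu^{\mathrm{op}}(\mathrm{id}\otimes\overline\sqcap^R)T_4=\mu^{\mathrm{op}}$, $\mu(\sqcap^L\otimes\mathrm{id})T_1=\mu$, $\mu(\mathrm{id}\otimes\sqcap^R)T_2=\mu$, with $\mu^{\mathrm{op}}(x\otimes y)=yx$.)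
   Context: Let $k$ be a field. A non-unital $k$-algebra $A$ is idempotent if its multiplication $\mu$ is surjective and has non-degenerate multiplication if ($ab=0\ \forall a$)$\Rightarrow b=0$ and ($ba=0\ \forall a$)$\Rightarrow b=0$. $\mathbb M(A)$ is its multiplier algebra (pairs $(\lambda,\rho)$ of linear maps $A\to A$ with $a\lambda(b)=\rho(a)b$), a unital algebra containing $A$ as a dense ideal; $A\otimes A\subseteq\mathbb M(A\otimes A)$. Multiplicative $\gamma:A\to\mathbb M(B)$ with idempotent $e\in\mathbb M(B)$, $\langle\gamma(a)b\rangle=eB$, $\langle b\gamma(a)\rangle=Be$ ($\langle\,\rangle$=span) extends uniquely to multiplicative $\overline\gamma:\mathbb M(A)\to\mathbb M(B)$ with $\overline\gamma(1)=e$. A weak multiplier bialgebra: idempotent $A$ with non-degenerate multiplication, idempotent $E\in\mathbb M(A\otimes A)$, multiplicative linear $\Delta:A\to\mathbb M(A\otimes A)$, linear $\epsilon:A\to k$ with: (i) $T_1(a\otimes b):=\Delta(a)(1\otimes b)$, $T_2(a\otimes b):=(a\otimes1)\Delta(b)$ lie in $A\otimes A$; (ii) $(T_2\otimes\mathrm{id})(\mathrm{id}\otimes T_1)=(\mathrm{id}\otimes T_1)(T_2\otimes\mathrm{id})$; (iii) $(\epsilon\otimes\mathrm{id})T_1=\mu=(\mathrm{id}\otimes\epsilon)T_2$; (iv) $\langle\Delta(a)(b\otimes b')\rangle=\langle E(b\otimes b')\rangle$, $\langle(b\otimes b')\Delta(a)\rangle=\langle(b\otimes b')E\rangle$; (v)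 $(E\otimes1)(1\otimes E)=E^{(3)}=(1\otimes E)(E\otimes1)$ with $E^{(3)}:=(\overline{\mathrm{id}\otimes\Delta})(E)=(\overline{\Delta\otimes\mathrm{id}})(E)$; (vi) $(\epsilon\otimes\mathrm{id})((1\otimes a)E(b\otimes c))=(\epsilon\otimes\mathrm{id})(\Delta(a)(b\otimes c))$ and $(\epsilon\otimes\mathrm{id})((a\otimes b)E(1\otimes c))=(\epsilon\otimes\mathrm{id})((a\otimes b)\Delta(c))$. It is regular if moreover $T_3(a\otimes b):=(1\otimes b)\Delta(a)$ and $T_4(a\otimes b):=\Delta(b)(a\otimes1)$ lie in $A\otimes A$ for all $a,b$. For $a\in A$ define multipliers: $\overline\sqcap^L(a)$ by $\overline\sqcap^L(a)b=(\epsilon\otimes\mathrm{id})((a\otimes1)\Delta(b))$, $b\overline\sqcap^L(a)=(\epsilon\otimes\mathrm{id})((a\otimes b)E)$; $\overline\sqcap^R(a)$ by $b\overline\sqcap^R(a)=(\mathrm{id}\otimes\epsilon)(\Delta(b)(1\otimes a))$, $\overline\sqcap^R(a)b=(\mathrm{id}\otimes\epsilon)(E(b\otimes a))$; $\sqcap^L(a)$ by $\sqcap^L(a)b=(\epsilon\otimes\mathrm{id})(E(a\otimes b))$, $b\sqcap^L(a)=(\epsilon\otimes\mathrm{id})(\Delta(b)(a\otimes1))$; $\sqcap^R(a)$ by $b\sqcap^R(a)=(\mathrm{id}\otimes\epsilon)((b\otimes a)E)$, $\sqcap^R(a)b=(\mathrm{id}\otimes\epsilon)((1\otimes a)\Delta(b))$.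 *)

theory Defs
  imports Main "HOL.Vector_Spaces" "HOL-Library.Function_Algebras"
begin

text \<open>The non-unital k-algebra A is a type 'a of class ring (Isabelle's ring has no unit),
  the field k is a type 'k of class field, and sc is the scalar multiplication.
  Tensor powers of A are represented faithfully (over a field) by their canonical
  image in the k-valued multilinear forms on tuples of linear functionals on A:
  the elementary tensor a1 x ... x an is the function sending a list of linear
  functionals [f1,...,fn] to f1 a1 * ... * fn an (and everything else to 0).\<close>

type_synonym ('a,'k) tens = "('a \<Rightarrow> 'k) list \<Rightarrow> 'k"
type_synonym ('a,'k) mlt = "(('a,'k) tens \<Rightarrow> ('a,'k) tens) \<times> (('a,'k) tens \<Rightarrow> ('a,'k) tens)"

definition algebra_over :: "('k::field \<Rightarrow> 'a::ring \<Rightarrow> 'a) \<Rightarrow> bool" where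
  "algebra_over sc \<longleftrightarrow> Vector_Spaces.vector_space sc \<and>
     (\<forall>c a b. sc c (a * b) = sc c a * b \<and> sc c (a * b) = a * sc c b)"

definition lin_fun :: "('k::field \<Rightarrow> 'a::ring \<Rightarrow> 'a) \<Rightarrow> ('a \<Rightarrow> 'k) \<Rightarrow> bool" where
  "lin_fun sc f \<longleftrightarrow> Vector_Spaces.linear sc (*) f"

definition etens :: "('k::field \<Rightarrow> 'a::ring \<Rightarrow> 'a) \<Rightarrow> 'a list \<Rightarrow> ('a,'k) tens" where
  "etens sc as = (\<lambda>fs. if length fs = length as \<and> (\<forall>f\<in>set fs. lin_fun sc f)
                        then prod_list (map2 (\<lambda>f a. f a) fs as) else 0)"

definition tsum :: "('k::field \<Rightarrow> 'a::ring \<Rightarrow> 'a) \<Rightarrow> 'a list list \<Rightarrow> ('a,'k) tens" where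
  "tsum sc xs = (\<lambda>fs. sum_list (map (\<lambda>as. etens sc as fs) xs))"

definition T :: "('k::field \<Rightarrow> 'a::ring \<Rightarrow> 'a) \<Rightarrow> nat \<Rightarrow> ('a,'k) tens set" where
  "T sc n = {t. \<exists>xs. (\<forall>as\<in>set xs. length as = n) \<and> t = tsum sc xs}"

definition tscale :: "'k::field \<Rightarrow> ('a,'k) tens \<Rightarrow> ('a,'k) tens" where
  "tscale c t = (\<lambda>fs. c * t fs)"

definition tspan :: "('a,'k::field) tens set \<Rightarrow> ('a,'k) tens set" where
  "tspan S = {x. \<exists>cs. set (map snd cs) \<subseteq> S \<and> x = sum_list (map (\<lambda>(c,s). tscale c s) cs)}"

definition rep :: "('k::field \<Rightarrow> 'a::ring \<Rightarrow> 'a) \<Rightarrow> nat \<Rightarrow> ('a,'k) tens \<Rightarrow> 'a list list" where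
  "rep sc n t = (SOME xs. (\<forall>as\<in>set xs. length as = n) \<and> t = tsum sc xs)"

definition tmul :: "('k::field \<Rightarrow> 'a::ring \<Rightarrow> 'a) \<Rightarrow> nat \<Rightarrow> ('a,'k) tens \<Rightarrow> ('a,'k) tens \<Rightarrow> ('a,'k) tens" where
  "tmul sc n s t = tsum sc [map2 (*) as bs. as \<leftarrow> rep sc n s, bs \<leftarrow> rep sc n t]"

text \<open>Tensor product of a degree-k tensor with another tensor (concatenation).\<close>
definition tcat :: "nat \<Rightarrow> ('a,'k::field) tens \<Rightarrow> ('a,'k) tens \<Rightarrow> ('a,'k) tens" where
  "tcat k s t = (\<lambda>fs. s (take k fs) * t (drop k fs))"

text \<open>A multiplier is a pair (lambda, rho) of linear maps with x lambda(y) = rho(x) y;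
  lambda is the left action m y, rho the right action x m. Maps are normalised to be 0
  outside the carrier so that equality of multipliers is equality of pairs.\<close>
definition M :: "('k::field \<Rightarrow> 'a::ring \<Rightarrow> 'a) \<Rightarrow> nat \<Rightarrow> ('a,'k) mlt set" where
  "M sc n = {(L,R). (\<forall>x\<in>T sc n. L x \<in> T sc n \<and> R x \<in> T sc n)
     \<and> (\<forall>x. x \<notin> T sc n \<longrightarrow> L x = 0 \<and> R x = 0)
     \<and> (\<forall>c x y. x \<in> T sc n \<longrightarrow> y \<in> T sc n \<longrightarrow>
           L (tscale c x + y) = tscale c (L x) + L y \<and> R (tscale c x + y) = tscale c (R x) + R y)
     \<and> (\<forall>x\<in>T sc n. \<forall>y\<in>T sc n. tmul sc n x (L y) = tmul sc n (R x) y)}"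

definition emb :: "('k::field \<Rightarrow> 'a::ring \<Rightarrow> 'a) \<Rightarrow> nat \<Rightarrow> ('a,'k) tens \<Rightarrow> ('a,'k) mlt" where
  "emb sc n t = (\<lambda>x. if x \<in> T sc n then tmul sc n t x else 0,
                 \<lambda>x. if x \<in> T sc n then tmul sc n x t else 0)"

definition mmul :: "('k::field \<Rightarrow> 'a::ring \<Rightarrow> 'a) \<Rightarrow> nat \<Rightarrow> ('a,'k) mlt \<Rightarrow> ('a,'k) mlt \<Rightarrow> ('a,'k) mlt" where
  "mmul sc n m m' = (\<lambda>x. if x \<in> T sc n then fst m (fst m' x) else 0,
                     \<lambda>x. if x \<in> T sc n then snd m' (snd m x) else 0)"

definition munit :: "('k::field \<Rightarrow> 'a::ring \<Rightarrow> 'a) \<Rightarrow> nat \<Rightarrow> ('a,'k) mlt" where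
  "munit sc n = (\<lambda>x. if x \<in> T sc n then x else 0, \<lambda>x. if x \<in> T sc n then x else 0)"

definition mzero :: "('a,'k::field) mlt" where
  "mzero = (\<lambda>x. 0, \<lambda>x. 0)"

definition msum :: "('a,'k::field) mlt list \<Rightarrow> ('a,'k) mlt" where
  "msum ms = (\<lambda>x. sum_list (map (\<lambda>m. fst m x) ms), \<lambda>x. sum_list (map (\<lambda>m. snd m x) ms))"

text \<open>Multipliers given by patterns of elements of A and units 1, e.g.
  [None, Some b] is the multiplier 1 x b of A x A.\<close>
definition pmulL :: "'a::ring option \<Rightarrow> 'a \<Rightarrow> 'a" where
  "pmulL p a = (case p of None \<Rightarrow> a | Some b \<Rightarrow> b * a)"
definition pmulR :: "'a::ring option \<Rightarrow> 'a \<Rightarrow> 'a" where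
  "pmulR p a = (case p of None \<Rightarrow> a | Some b \<Rightarrow> a * b)"

definition pm :: "('k::field \<Rightarrow> 'a::ring \<Rightarrow> 'a) \<Rightarrow> nat \<Rightarrow> 'a option list \<Rightarrow> ('a,'k) mlt" where
  "pm sc n ps = (\<lambda>x. if x \<in> T sc n then tsum sc (map (map2 pmulL ps) (rep sc n x)) else 0,
                 \<lambda>x. if x \<in> T sc n then tsum sc (map (map2 pmulR ps) (rep sc n x)) else 0)"

text \<open>F x id (F acting on the first k factors) and id x F (F acting on the factors after the k-th)
  as maps on the n-fold tensor power.\<close>
definition liftL :: "('k::field \<Rightarrow> 'a::ring \<Rightarrow> 'a) \<Rightarrow> nat \<Rightarrow> nat \<Rightarrow> (('a,'k) tens \<Rightarrow> ('a,'k) tens) \<Rightarrow> ('a,'k) tens \<Rightarrow> ('a,'k) tens" where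
  "liftL sc k n F x = sum_list (map (\<lambda>as. tcat k (F (etens sc (take k as))) (etens sc (drop k as))) (rep sc n x))"
definition liftR :: "('k::field \<Rightarrow> 'a::ring \<Rightarrow> 'a) \<Rightarrow> nat \<Rightarrow> nat \<Rightarrow> (('a,'k) tens \<Rightarrow> ('a,'k) tens) \<Rightarrow> ('a,'k) tens \<Rightarrow> ('a,'k) tens" where
  "liftR sc k n F x = sum_list (map (\<lambda>as. tcat k (etens sc (take k as)) (F (etens sc (drop k as)))) (rep sc n x))"

text \<open>m x 1 and 1 x m for a multiplier m.\<close>
definition mliftL :: "('k::field \<Rightarrow> 'a::ring \<Rightarrow> 'a) \<Rightarrow> nat \<Rightarrow> nat \<Rightarrow> ('a,'k) mlt \<Rightarrow> ('a,'k) mlt" where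
  "mliftL sc k n m = (\<lambda>x. if x \<in> T sc n then liftL sc k n (fst m) x else 0,
                      \<lambda>x. if x \<in> T sc n then liftL sc k n (snd m) x else 0)"
definition mliftR :: "('k::field \<Rightarrow> 'a::ring \<Rightarrow> 'a) \<Rightarrow> nat \<Rightarrow> nat \<Rightarrow> ('a,'k) mlt \<Rightarrow> ('a,'k) mlt" where
  "mliftR sc k n m = (\<lambda>x. if x \<in> T sc n then liftR sc k n (fst m) x else 0,
                      \<lambda>x. if x \<in> T sc n then liftR sc k n (snd m) x else 0)"

text \<open>The unique multiplicative extension gamma-bar : M(A x A) -> M(A x A x A) of
  gamma : A x A -> M(A x A x A) with gamma-bar(1) = e (normalised to 0 off M(A x A)).\<close>
definition ext :: "('k::field \<Rightarrow> 'a::ring \<Rightarrow> 'a) \<Rightarrow> (('a,'k) tens \<Rightarrow> ('a,'k) mlt) \<Rightarrow> ('a,'k) mlt \<Rightarrow> ('a,'k) mlt \<Rightarrow> ('a,'k) mlt" where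
  "ext sc \<gamma> e = (THE \<Gamma>. (\<forall>m\<in>M sc 2. \<Gamma> m \<in> M sc 3)
       \<and> (\<forall>m\<in>M sc 2. \<forall>m'\<in>M sc 2. \<Gamma> (mmul sc 2 m m') = mmul sc 3 (\<Gamma> m) (\<Gamma> m'))
       \<and> (\<forall>t\<in>T sc 2. \<Gamma> (emb sc 2 t) = \<gamma> t)
       \<and> \<Gamma> (munit sc 2) = e
       \<and> (\<forall>m. m \<notin> M sc 2 \<longrightarrow> \<Gamma> m = mzero))"

definition inT2 :: "('k::field \<Rightarrow> 'a::ring \<Rightarrow> 'a) \<Rightarrow> ('a,'k) mlt \<Rightarrow> ('a,'k) tens" where
  "inT2 sc m = (THE t. t \<in> T sc 2 \<and> emb sc 2 t = m)"

definition T1 :: "('k::field \<Rightarrow> 'a::ring \<Rightarrow> 'a) \<Rightarrow> ('a \<Rightarrow> ('a,'k) mlt) \<Rightarrow> 'a \<Rightarrow> 'a \<Rightarrow> ('a,'k) tens" where "T1 sc \<Delta> a b = inT2 sc (mmul sc 2 (\<Delta> a) (pm sc 2 [None, Some b]))"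
definition T2 :: "('k::field \<Rightarrow> 'a::ring \<Rightarrow> 'a) \<Rightarrow> ('a \<Rightarrow> ('a,'k) mlt) \<Rightarrow> 'a \<Rightarrow> 'a \<Rightarrow> ('a,'k) tens" where "T2 sc \<Delta> a b = inT2 sc (mmul sc 2 (pm sc 2 [Some a, None]) (\<Delta> b))"
definition T3 :: "('k::field \<Rightarrow> 'a::ring \<Rightarrow> 'a) \<Rightarrow> ('a \<Rightarrow> ('a,'k) mlt) \<Rightarrow> 'a \<Rightarrow> 'a \<Rightarrow> ('a,'k) tens" where "T3 sc \<Delta> a b = inT2 sc (mmul sc 2 (pm sc 2 [None, Some b]) (\<Delta> a))"
definition T4 :: "('k::field \<Rightarrow> 'a::ring \<Rightarrow> 'a) \<Rightarrow> ('a \<Rightarrow> ('a,'k) mlt) \<Rightarrow> 'a \<Rightarrow> 'a \<Rightarrow> ('a,'k) tens" where "T4 sc \<Delta> a b = inT2 sc (mmul sc 2 (\<Delta> b) (pm sc 2 [Some a, None]))"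

definition T1map :: "('k::field \<Rightarrow> 'a::ring \<Rightarrow> 'a) \<Rightarrow> ('a \<Rightarrow> ('a,'k) mlt) \<Rightarrow> ('a,'k) tens \<Rightarrow> ('a,'k) tens" where "T1map sc \<Delta> x = sum_list (map (\<lambda>as. T1 sc \<Delta> (as!0) (as!1)) (rep sc 2 x))"
definition T2map :: "('k::field \<Rightarrow> 'a::ring \<Rightarrow> 'a) \<Rightarrow> ('a \<Rightarrow> ('a,'k) mlt) \<Rightarrow> ('a,'k) tens \<Rightarrow> ('a,'k) tens" where "T2map sc \<Delta> x = sum_list (map (\<lambda>as. T2 sc \<Delta> (as!0) (as!1)) (rep sc 2 x))"

definition epsid :: "('k::field \<Rightarrow> 'a::ring \<Rightarrow> 'a) \<Rightarrow> ('a \<Rightarrow> 'k) \<Rightarrow> ('a,'k) tens \<Rightarrow> 'a" where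
  "epsid sc \<epsilon> x = sum_list (map (\<lambda>as. sc (\<epsilon> (as!0)) (as!1)) (rep sc 2 x))"
definition ideps :: "('k::field \<Rightarrow> 'a::ring \<Rightarrow> 'a) \<Rightarrow> ('a \<Rightarrow> 'k) \<Rightarrow> ('a,'k) tens \<Rightarrow> 'a" where
  "ideps sc \<epsilon> x = sum_list (map (\<lambda>as. sc (\<epsilon> (as!1)) (as!0)) (rep sc 2 x))"

definition DeltaId :: "('k::field \<Rightarrow> 'a::ring \<Rightarrow> 'a) \<Rightarrow> ('a \<Rightarrow> ('a,'k) mlt) \<Rightarrow> ('a,'k) tens \<Rightarrow> ('a,'k) mlt" where
  "DeltaId sc \<Delta> x = msum (map (\<lambda>as. mmul sc 3 (mliftL sc 2 3 (\<Delta> (as!0))) (pm sc 3 [None, None, Some (as!1)])) (rep sc 2 x))"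
definition IdDelta :: "('k::field \<Rightarrow> 'a::ring \<Rightarrow> 'a) \<Rightarrow> ('a \<Rightarrow> ('a,'k) mlt) \<Rightarrow> ('a,'k) tens \<Rightarrow> ('a,'k) mlt" where
  "IdDelta sc \<Delta> x = msum (map (\<lambda>as. mmul sc 3 (pm sc 3 [Some (as!0), None, None]) (mliftR sc 1 3 (\<Delta> (as!1)))) (rep sc 2 x))"

definition wmba :: "('k::field \<Rightarrow> 'a::ring \<Rightarrow> 'a) \<Rightarrow> ('a,'k) mlt \<Rightarrow> ('a \<Rightarrow> ('a,'k) mlt) \<Rightarrow> ('a \<Rightarrow> 'k) \<Rightarrow> bool" where
  "wmba sc E \<Delta> \<epsilon> \<longleftrightarrow>
     algebra_over sc
   \<comment> \<open>idempotent, non-degenerate multiplication\<close>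
   \<and> (\<forall>c::'a. \<exists>xys. c = sum_list (map (\<lambda>(x,y). x * y) xys))
   \<and> (\<forall>b::'a. (\<forall>a. a * b = 0) \<longrightarrow> b = 0) \<and> (\<forall>b::'a. (\<forall>a. b * a = 0) \<longrightarrow> b = 0)
   \<comment> \<open>E idempotent multiplier\<close>
   \<and> E \<in> M sc 2 \<and> mmul sc 2 E E = E
   \<comment> \<open>Delta multiplicative linear\<close>
   \<and> (\<forall>a. \<Delta> a \<in> M sc 2)
   \<and> (\<forall>a b. \<Delta> (a * b) = mmul sc 2 (\<Delta> a) (\<Delta> b))
   \<and> (\<forall>c a b. \<Delta> (sc c a + b) = (\<lambda>x. tscale c (fst (\<Delta> a) x) + fst (\<Delta> b) x,
                                  \<lambda>x. tscale c (snd (\<Delta> a) x) + snd (\<Delta> b) x))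
   \<comment> \<open>epsilon linear\<close>
   \<and> (\<forall>c a b. \<epsilon> (sc c a + b) = c * \<epsilon> a + \<epsilon> b)
   \<comment> \<open>(i)\<close>
   \<and> (\<forall>a b. \<exists>t\<in>T sc 2. emb sc 2 t = mmul sc 2 (\<Delta> a) (pm sc 2 [None, Some b]))
   \<and> (\<forall>a b. \<exists>t\<in>T sc 2. emb sc 2 t = mmul sc 2 (pm sc 2 [Some a, None]) (\<Delta> b))
   \<comment> \<open>(ii)\<close>
   \<and> (\<forall>x\<in>T sc 3. liftL sc 2 3 (T2map sc \<Delta>) (liftR sc 1 3 (T1map sc \<Delta>) x)
                 = liftR sc 1 3 (T1map sc \<Delta>) (liftL sc 2 3 (T2map sc \<Delta>) x))
   \<comment> \<open>(iii)\<close>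
   \<and> (\<forall>a b. epsid sc \<epsilon> (T1 sc \<Delta> a b) = a * b)
   \<and> (\<forall>a b. ideps sc \<epsilon> (T2 sc \<Delta> a b) = a * b)
   \<comment> \<open>(iv)\<close>
   \<and> tspan {fst (\<Delta> a) (etens sc [b, b']) | a b b'. True} = tspan {fst E (etens sc [b, b']) | b b'. True}
   \<and> tspan {snd (\<Delta> a) (etens sc [b, b']) | a b b'. True} = tspan {snd E (etens sc [b, b']) | b b'. True}
   \<comment> \<open>(v)\<close>
   \<and> ext sc (IdDelta sc \<Delta>) (mliftR sc 1 3 E) E = ext sc (DeltaId sc \<Delta>) (mliftL sc 2 3 E) E
   \<and> mmul sc 3 (mliftL sc 2 3 E) (mliftR sc 1 3 E) = ext sc (IdDelta sc \<Delta>) (mliftR sc 1 3 E) E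
   \<and> mmul sc 3 (mliftR sc 1 3 E) (mliftL sc 2 3 E) = ext sc (IdDelta sc \<Delta>) (mliftR sc 1 3 E) E
   \<comment> \<open>(vi)\<close>
   \<and> (\<forall>a b c. epsid sc \<epsilon> (fst (pm sc 2 [None, Some a]) (fst E (etens sc [b, c])))
               = epsid sc \<epsilon> (fst (\<Delta> a) (etens sc [b, c])))
   \<and> (\<forall>a b c. epsid sc \<epsilon> (snd (pm sc 2 [None, Some c]) (snd E (etens sc [a, b])))
               = epsid sc \<epsilon> (snd (\<Delta> c) (etens sc [a, b])))"

definition regular_wmba :: "('k::field \<Rightarrow> 'a::ring \<Rightarrow> 'a) \<Rightarrow> ('a,'k) mlt \<Rightarrow> ('a \<Rightarrow> ('a,'k) mlt) \<Rightarrow> ('a \<Rightarrow> 'k) \<Rightarrow> bool" where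
  "regular_wmba sc E \<Delta> \<epsilon> \<longleftrightarrow> wmba sc E \<Delta> \<epsilon>
   \<and> (\<forall>a b. \<exists>t\<in>T sc 2. emb sc 2 t = mmul sc 2 (pm sc 2 [None, Some b]) (\<Delta> a))
   \<and> (\<forall>a b. \<exists>t\<in>T sc 2. emb sc 2 t = mmul sc 2 (\<Delta> b) (pm sc 2 [Some a, None]))"

text \<open>Each is a pair (left action m b, right action b m) on A.\<close>
definition piLbar :: "('k::field \<Rightarrow> 'a::ring \<Rightarrow> 'a) \<Rightarrow> ('a,'k) mlt \<Rightarrow> ('a \<Rightarrow> ('a,'k) mlt) \<Rightarrow> ('a \<Rightarrow> 'k) \<Rightarrow> 'a \<Rightarrow> ('a \<Rightarrow> 'a) \<times> ('a \<Rightarrow> 'a)" where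
  "piLbar sc E \<Delta> \<epsilon> a = (\<lambda>b. epsid sc \<epsilon> (T2 sc \<Delta> a b), \<lambda>b. epsid sc \<epsilon> (snd E (etens sc [a, b])))"
definition piRbar :: "('k::field \<Rightarrow> 'a::ring \<Rightarrow> 'a) \<Rightarrow> ('a,'k) mlt \<Rightarrow> ('a \<Rightarrow> ('a,'k) mlt) \<Rightarrow> ('a \<Rightarrow> 'k) \<Rightarrow> 'a \<Rightarrow> ('a \<Rightarrow> 'a) \<times> ('a \<Rightarrow> 'a)" where
  "piRbar sc E \<Delta> \<epsilon> a = (\<lambda>b. ideps sc \<epsilon> (fst E (etens sc [b, a])), \<lambda>b. ideps sc \<epsilon> (T1 sc \<Delta> b a))"
definition piL :: "('k::field \<Rightarrow> 'a::ring \<Rightarrow> 'a) \<Rightarrow> ('a,'k) mlt \<Rightarrow> ('a \<Rightarrow> ('a,'k) mlt) \<Rightarrow> ('a \<Rightarrow> 'k) \<Rightarrow> 'a \<Rightarrow> ('a \<Rightarrow> 'a) \<times> ('a \<Rightarrow> 'a)" where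
  "piL sc E \<Delta> \<epsilon> a = (\<lambda>b. epsid sc \<epsilon> (fst E (etens sc [a, b])), \<lambda>b. epsid sc \<epsilon> (T4 sc \<Delta> a b))"
definition piR :: "('k::field \<Rightarrow> 'a::ring \<Rightarrow> 'a) \<Rightarrow> ('a,'k) mlt \<Rightarrow> ('a \<Rightarrow> ('a,'k) mlt) \<Rightarrow> ('a \<Rightarrow> 'k) \<Rightarrow> 'a \<Rightarrow> ('a \<Rightarrow> 'a) \<times> ('a \<Rightarrow> 'a)" where
  "piR sc E \<Delta> \<epsilon> a = (\<lambda>b. ideps sc \<epsilon> (T3 sc \<Delta> b a), \<lambda>b. ideps sc \<epsilon> (snd E (etens sc [b, a])))"

end

theory Submission
  imports Defs
begin

lemma vs_of: "algebra_over sc \<Longrightarrow> Vector_Spaces.vector_space sc"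
  by (simp add: algebra_over_def)

lemma vs_field: "Vector_Spaces.vector_space ((*) :: 'k::field \<Rightarrow> 'k \<Rightarrow> 'k)"
  by unfold_locales (auto simp: algebra_simps)

lemma linI:
  assumes "algebra_over sc" "\<And>x y. f (x + y) = f x + f y" "\<And>c x. f (sc c x) = sc c (f x)"
  shows "Vector_Spaces.linear sc sc f"
  using assms by (simp add: linear_iff vs_of)

lemma lin_mulL: "algebra_over sc \<Longrightarrow> Vector_Spaces.linear sc sc (\<lambda>x. b * x)"
proof (rule linI)
  assume a: "algebra_over sc"
  then show "\<And>c x. b * sc c x = sc c (b * x)" unfolding algebra_over_def by metis
qed (auto simp: distrib_left)

lemma lin_mulR: "algebra_over sc \<Longrightarrow> Vector_Spaces.linear sc sc (\<lambda>x. x * b)"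
proof (rule linI)
  assume a: "algebra_over sc"
  then show "\<And>c x. sc c x * b = sc c (x * b)" unfolding algebra_over_def by metis
qed (auto simp: distrib_right)

lemma lin_fun_comp: "lin_fun sc \<phi> \<Longrightarrow> Vector_Spaces.linear sc sc f \<Longrightarrow> lin_fun sc (\<lambda>x. \<phi> (f x))"
  unfolding lin_fun_def using Vector_Spaces.linear_compose[of sc sc f "(*)" \<phi>]
  by (simp add: comp_def)

lemma lin_fun_add: "lin_fun sc \<phi> \<Longrightarrow> \<phi> (x + y) = \<phi> x + \<phi> y"
  unfolding lin_fun_def linear_iff by simp
lemma lin_fun_scale: "lin_fun sc \<phi> \<Longrightarrow> \<phi> (sc c x) = c * \<phi> x"
  unfolding lin_fun_def linear_iff by simp
lemma lin_fun_0: "lin_fun sc \<phi> \<Longrightarrow> \<phi> 0 = 0"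
proof -
  assume "lin_fun sc \<phi>"
  then have "\<phi> 0 = \<phi> 0 + \<phi> 0" using lin_fun_add[of sc \<phi> 0 0] by simp
  then show ?thesis by (metis add_cancel_right_right)
qed
lemma lin_fun_diff: "lin_fun sc \<phi> \<Longrightarrow> \<phi> (x - y) = \<phi> x - \<phi> y"
  using lin_fun_add[of sc \<phi> "x - y" y] by (simp add: algebra_simps)

lemma lin_fun_sum_list: "lin_fun sc \<phi> \<Longrightarrow> \<phi> (sum_list (map f xs)) = sum_list (map (\<lambda>x. \<phi> (f x)) xs)"
  by (induct xs) (auto simp: lin_fun_0 lin_fun_add)

lemma sep_exists:
  fixes sc :: "'b::field \<Rightarrow> 'a::ring \<Rightarrow> 'a"
  assumes "algebra_over sc" "(w::'a::ring) \<noteq> 0"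
  shows "\<exists>\<phi>. lin_fun sc \<phi> \<and> \<phi> w \<noteq> 0"
proof -
  interpret V: vector_space sc by (rule vs_of[OF assms(1)])
  interpret P: vector_space_pair sc "(*) :: 'b::field \<Rightarrow> 'b \<Rightarrow> 'b"
    by (simp add: vector_space_pair_def vs_of[OF assms(1)] vs_field)
  have "V.independent {w}" using assms(2)
    by (simp add: V.independent_insert V.span_empty)
  then obtain g where "Vector_Spaces.linear sc (*) g" "\<forall>x\<in>{w}. g x = (\<lambda>_. 1::'b) x"
    using P.linear_independent_extend[of "{w}" "\<lambda>_. 1"] by blast
  then show ?thesis unfolding lin_fun_def by auto
qed

lemma sep:
  assumes "algebra_over sc" "\<And>\<phi>. lin_fun sc \<phi> \<Longrightarrow> \<phi> u = \<phi> (v::'a::ring)"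
  shows "u = v"
proof (rule ccontr)
  assume "u \<noteq> v"
  then obtain \<phi> where "lin_fun sc \<phi>" "\<phi> (u - v) \<noteq> 0" using sep_exists[OF assms(1), of "u - v"] by auto
  then show False using assms(2) lin_fun_diff by fastforce
qed


definition ts2 :: "('k::field \<Rightarrow> 'a::ring \<Rightarrow> 'a) \<Rightarrow> ('a \<times> 'a) list \<Rightarrow> ('a,'k) tens" where
  "ts2 sc ps = tsum sc (map (\<lambda>(x,y). [x,y]) ps)"

lemma ts2_eval: "lin_fun sc \<phi> \<Longrightarrow> lin_fun sc \<psi> \<Longrightarrow>
   ts2 sc ps [\<phi>,\<psi>] = sum_list (map (\<lambda>(x,y). \<phi> x * \<psi> y) ps)"
proof -
  assume a: "lin_fun sc \<phi>" "lin_fun sc \<psi>"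
  have e: "etens sc [x,y] [\<phi>,\<psi>] = \<phi> x * \<psi> y" for x y
    unfolding etens_def using a by simp
  show ?thesis unfolding ts2_def tsum_def
    by (induct ps) (auto simp: e)
qed

lemma ts2_eval0: "\<not>(\<exists>\<phi> \<psi>. fs = [\<phi>,\<psi>] \<and> lin_fun sc \<phi> \<and> lin_fun sc \<psi>) \<Longrightarrow> ts2 sc ps fs = 0"
proof -
  assume a: "\<not>(\<exists>\<phi> \<psi>. fs = [\<phi>,\<psi>] \<and> lin_fun sc \<phi> \<and> lin_fun sc \<psi>)"
  have "etens sc [x,y] fs = 0" for x y
  proof -
    have "\<not> (length fs = 2 \<and> (\<forall>f\<in>set fs. lin_fun sc f))"
    proof
      assume "length fs = 2 \<and> (\<forall>f\<in>set fs. lin_fun sc f)"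
      then obtain f g where "fs = [f,g]" "lin_fun sc f" "lin_fun sc g"
        by (cases fs; cases "tl fs"; auto)
      with a show False by blast
    qed
    then show ?thesis unfolding etens_def by auto
  qed
  then show ?thesis unfolding ts2_def tsum_def by (induct ps) auto
qed

lemma ts2_ext:
  assumes "\<And>\<phi> \<psi>. lin_fun sc \<phi> \<Longrightarrow> lin_fun sc \<psi> \<Longrightarrow>
     sum_list (map (\<lambda>(x,y). \<phi> x * \<psi> y) ps) = sum_list (map (\<lambda>(x,y). \<phi> x * \<psi> y) qs)"
  shows "ts2 sc ps = ts2 sc qs"
proof
  fix fs
  show "ts2 sc ps fs = ts2 sc qs fs"
  proof (cases "\<exists>\<phi> \<psi>. fs = [\<phi>,\<psi>] \<and> lin_fun sc \<phi> \<and> lin_fun sc \<psi>")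
    case True
    then obtain \<phi> \<psi> where "fs = [\<phi>,\<psi>]" "lin_fun sc \<phi>" "lin_fun sc \<psi>" by blast
    then show ?thesis using assms[of \<phi> \<psi>] ts2_eval[of sc \<phi> \<psi>] by simp
  next
    case False
    then show ?thesis using ts2_eval0[OF False] by simp
  qed
qed

lemma ts2_append: "ts2 sc (ps @ qs) = ts2 sc ps + ts2 sc qs"
  unfolding ts2_def tsum_def by (auto simp: fun_eq_iff)

lemma ts2_Nil: "ts2 sc [] = 0"
  unfolding ts2_def tsum_def by (auto simp: fun_eq_iff)

lemma etens2: "etens sc [x,y] = ts2 sc [(x,y)]"
  unfolding ts2_def tsum_def by (auto simp: fun_eq_iff)

definition pr2 :: "'a list \<Rightarrow> 'a \<times> 'a" where "pr2 as = (as!0, as!1)"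

lemma len2: "length as = 2 \<Longrightarrow> as = [as!0, as!1]"
  by (cases as; cases "tl as"; auto)

lemma map_pr2: "\<forall>as\<in>set xs. length as = 2 \<Longrightarrow> map (\<lambda>(x,y). [x,y]) (map pr2 xs) = xs"
  by (induct xs) (auto simp: pr2_def dest: len2[symmetric])

lemma T2_iff: "x \<in> T sc 2 \<longleftrightarrow> (\<exists>ps. x = ts2 sc ps)"
proof
  assume "x \<in> T sc 2"
  then obtain xs where xs: "\<forall>as\<in>set xs. length as = 2" "x = tsum sc xs" unfolding T_def by auto
  have "map (\<lambda>(x,y). [x,y]) (map pr2 xs) = xs"
    using xs(1) by (rule map_pr2)
  then show "\<exists>ps. x = ts2 sc ps" using xs(2) unfolding ts2_def by metis
next
  assume "\<exists>ps. x = ts2 sc ps"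
  then obtain ps where "x = ts2 sc ps" by blast
  then show "x \<in> T sc 2" unfolding T_def ts2_def
    by (intro CollectI exI[of _ "map (\<lambda>(x,y). [x,y]) ps"]) auto
qed

lemma ts2_T[simp]: "ts2 sc ps \<in> T sc 2" using T2_iff by blast

lemma rep2:
  assumes "x \<in> T sc 2"
  shows "x = ts2 sc (map pr2 (rep sc 2 x))" "map (\<lambda>(x,y). [x,y]) (map pr2 (rep sc 2 x)) = rep sc 2 x"
proof -
  have ex: "\<exists>xs. (\<forall>as\<in>set xs. length as = 2) \<and> x = tsum sc xs" using assms unfolding T_def by auto
  have r: "(\<forall>as\<in>set (rep sc 2 x). length as = 2) \<and> x = tsum sc (rep sc 2 x)"
    unfolding rep_def by (rule someI_ex[OF ex])
  show e: "map (\<lambda>(x,y). [x,y]) (map pr2 (rep sc 2 x)) = rep sc 2 x"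
    using r map_pr2 by blast
  show "x = ts2 sc (map pr2 (rep sc 2 x))" unfolding ts2_def e using r by simp
qed

lemma rep2_len: "x \<in> T sc 2 \<Longrightarrow> as \<in> set (rep sc 2 x) \<Longrightarrow> as = [as!0, as!1]"
proof -
  assume "x \<in> T sc 2" "as \<in> set (rep sc 2 x)"
  have ex: "\<exists>xs. (\<forall>as\<in>set xs. length as = 2) \<and> x = tsum sc xs" using \<open>x \<in> T sc 2\<close> unfolding T_def by auto
  have r: "(\<forall>as\<in>set (rep sc 2 x). length as = 2)"
    unfolding rep_def using someI_ex[OF ex] by blast
  then show ?thesis using \<open>as \<in> _\<close> len2 by blast
qed


lemma ts2_evalc: "lin_fun sc \<phi> \<Longrightarrow> lin_fun sc \<psi> \<Longrightarrow>
   sum_list (map (\<lambda>(x,y). \<phi> x * \<psi> y) ps) = ts2 sc ps [\<phi>,\<psi>]"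
  by (simp add: ts2_eval)

lemma ts2_map_wd:
  assumes "Vector_Spaces.linear sc sc f" "Vector_Spaces.linear sc sc g" "ts2 sc ps = ts2 sc qs"
  shows "ts2 sc (map (\<lambda>(x,y). (f x, g y)) ps) = ts2 sc (map (\<lambda>(x,y). (f x, g y)) qs)"
proof (rule ts2_ext)
  fix \<phi> \<psi> assume l: "lin_fun sc \<phi>" "lin_fun sc \<psi>"
  have l2: "lin_fun sc (\<lambda>x. \<phi> (f x))" "lin_fun sc (\<lambda>x. \<psi> (g x))"
    using l assms lin_fun_comp by blast+
  have "sum_list (map (\<lambda>(x,y). \<phi> x * \<psi> y) (map (\<lambda>(x,y). (f x, g y)) ps))
      = sum_list (map (\<lambda>(x,y). \<phi> (f x) * \<psi> (g y)) ps)"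
    by (induct ps) auto
  also have "\<dots> = ts2 sc ps [(\<lambda>x. \<phi> (f x)), (\<lambda>x. \<psi> (g x))]" using l2 ts2_eval by metis
  also have "\<dots> = ts2 sc qs [(\<lambda>x. \<phi> (f x)), (\<lambda>x. \<psi> (g x))]" using assms(3) by simp
  also have "\<dots> = sum_list (map (\<lambda>(x,y). \<phi> (f x) * \<psi> (g y)) qs)" using l2 ts2_eval by metis
  also have "\<dots> = sum_list (map (\<lambda>(x,y). \<phi> x * \<psi> y) (map (\<lambda>(x,y). (f x, g y)) qs))"
    by (induct qs) auto
  finally show "sum_list (map (\<lambda>(x,y). \<phi> x * \<psi> y) (map (\<lambda>(x,y). (f x, g y)) ps))
      = sum_list (map (\<lambda>(x,y). \<phi> x * \<psi> y) (map (\<lambda>(x,y). (f x, g y)) qs))" .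
qed

lemma lin_id: "algebra_over sc \<Longrightarrow> Vector_Spaces.linear sc sc (\<lambda>x. x)"
  by (rule linI) auto

lemma tscale_ts2:
  assumes "algebra_over sc"
  shows "tscale c (ts2 sc ps) = ts2 sc (map (\<lambda>(x,y). (sc c x, y)) ps)"
proof
  fix fs
  show "tscale c (ts2 sc ps) fs = ts2 sc (map (\<lambda>(x,y). (sc c x, y)) ps) fs"
  proof (cases "\<exists>\<phi> \<psi>. fs = [\<phi>,\<psi>] \<and> lin_fun sc \<phi> \<and> lin_fun sc \<psi>")
    case True
    then obtain \<phi> \<psi> where f: "fs = [\<phi>,\<psi>]" "lin_fun sc \<phi>" "lin_fun sc \<psi>" by blast
    have "c * sum_list (map (\<lambda>(x,y). \<phi> x * \<psi> y) ps) =
          sum_list (map (\<lambda>(x,y). \<phi> x * \<psi> y) (map (\<lambda>(x,y). (sc c x, y)) ps))"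
      by (induct ps) (auto simp: lin_fun_scale[OF f(2)] algebra_simps)
    then show ?thesis using f by (simp add: tscale_def ts2_eval)
  next
    case False
    then show ?thesis using ts2_eval0[OF False] by (simp add: tscale_def)
  qed
qed

lemma lin_eps:
  assumes "algebra_over sc" "\<forall>c a b. \<epsilon> (sc c a + b) = c * \<epsilon> a + \<epsilon> b"
  shows "lin_fun sc \<epsilon>"
proof -
  interpret V: vector_space sc by (rule vs_of[OF assms(1)])
  have z: "\<epsilon> 0 = 0"
  proof -
    have "\<epsilon> (sc 1 0 + 0) = 1 * \<epsilon> 0 + \<epsilon> 0" using assms(2) by blast
    then have "\<epsilon> 0 = \<epsilon> 0 + \<epsilon> 0" by simp
    then show ?thesis by (metis add_cancel_right_right)
  qed
  have a: "\<epsilon> (x + y) = \<epsilon> x + \<epsilon> y" for x y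
    using assms(2)[rule_format, of 1 x y] by simp
  have s: "\<epsilon> (sc c x) = c * \<epsilon> x" for c x
    using assms(2)[rule_format, of c x 0] z by simp
  show ?thesis unfolding lin_fun_def linear_iff using a s vs_field vs_of[OF assms(1)] by auto
qed

lemma sum_scale_lin: "lin_fun sc \<phi> \<Longrightarrow>
   \<phi> (sum_list (map (\<lambda>(x,y). sc (k x y) (h x y)) ps)) = sum_list (map (\<lambda>(x,y). k x y * \<phi> (h x y)) ps)"
  by (induct ps) (auto simp: lin_fun_add lin_fun_0 lin_fun_scale)

lemma sl_aux1: "sum_list (map (\<lambda>as. f (as!0) (as!1)) (map (\<lambda>(x,y). [x,y]) qs)) = sum_list (map (\<lambda>(x,y). f x y) qs)"
  by (induct qs) auto

lemma epsid_ts2: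
  assumes "algebra_over sc" "lin_fun sc \<epsilon>"
  shows "epsid sc \<epsilon> (ts2 sc ps) = sum_list (map (\<lambda>(x,y). sc (\<epsilon> x) y) ps)"
proof -
  let ?x = "ts2 sc ps"
  let ?qs = "map pr2 (rep sc 2 ?x)"
  have r: "?x = ts2 sc ?qs" "map (\<lambda>(x,y). [x,y]) ?qs = rep sc 2 ?x" using rep2[OF ts2_T] by auto
  have "epsid sc \<epsilon> ?x = sum_list (map (\<lambda>as. sc (\<epsilon> (as!0)) (as!1)) (map (\<lambda>(x,y). [x,y]) ?qs))"
    unfolding epsid_def using r(2) by simp
  also have "\<dots> = sum_list (map (\<lambda>(x,y). sc (\<epsilon> x) y) ?qs)"
    by (rule sl_aux1)
  also have "\<dots> = sum_list (map (\<lambda>(x,y). sc (\<epsilon> x) y) ps)"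
  proof (rule sep[OF assms(1)])
    fix \<phi> assume l: "lin_fun sc \<phi>"
    have c: "\<And>qs. \<phi> (sum_list (map (\<lambda>(x,y). sc (\<epsilon> x) y) qs)) = ts2 sc qs [\<epsilon>, \<phi>]"
    proof -
      fix qs
      show "\<phi> (sum_list (map (\<lambda>(x,y). sc (\<epsilon> x) y) qs)) = ts2 sc qs [\<epsilon>, \<phi>]"
        using sum_scale_lin[OF l, of "\<lambda>x y. \<epsilon> x" "\<lambda>x y. y" qs] ts2_eval[OF assms(2) l, of qs]
        by (simp add: case_prod_unfold)
    qed
    show "\<phi> (sum_list (map (\<lambda>(x,y). sc (\<epsilon> x) y) ?qs)) = \<phi> (sum_list (map (\<lambda>(x,y). sc (\<epsilon> x) y) ps))"
      using c[of ?qs] c[of ps] r(1) by simp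
  qed
  finally show ?thesis .
qed

lemma ideps_ts2:
  assumes "algebra_over sc" "lin_fun sc \<epsilon>"
  shows "ideps sc \<epsilon> (ts2 sc ps) = sum_list (map (\<lambda>(x,y). sc (\<epsilon> y) x) ps)"
proof -
  let ?x = "ts2 sc ps"
  let ?qs = "map pr2 (rep sc 2 ?x)"
  have r: "?x = ts2 sc ?qs" "map (\<lambda>(x,y). [x,y]) ?qs = rep sc 2 ?x" using rep2[OF ts2_T] by auto
  have "ideps sc \<epsilon> ?x = sum_list (map (\<lambda>as. sc (\<epsilon> (as!1)) (as!0)) (map (\<lambda>(x,y). [x,y]) ?qs))"
    unfolding ideps_def using r(2) by simp
  also have "\<dots> = sum_list (map (\<lambda>(x,y). sc (\<epsilon> y) x) ?qs)"
    by (rule sl_aux1[of "\<lambda>x y. sc (\<epsilon> y) x"])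
  also have "\<dots> = sum_list (map (\<lambda>(x,y). sc (\<epsilon> y) x) ps)"
  proof (rule sep[OF assms(1)])
    fix \<phi> assume l: "lin_fun sc \<phi>"
    have c: "\<And>qs. \<phi> (sum_list (map (\<lambda>(x,y). sc (\<epsilon> y) x) qs)) = ts2 sc qs [\<phi>, \<epsilon>]"
    proof -
      fix qs
      show "\<phi> (sum_list (map (\<lambda>(x,y). sc (\<epsilon> y) x) qs)) = ts2 sc qs [\<phi>, \<epsilon>]"
        using sum_scale_lin[OF l, of "\<lambda>x y. \<epsilon> y" "\<lambda>x y. x" qs] ts2_eval[OF l assms(2), of qs]
        by (simp add: mult.commute case_prod_unfold)
    qed
    show "\<phi> (sum_list (map (\<lambda>(x,y). sc (\<epsilon> y) x) ?qs)) = \<phi> (sum_list (map (\<lambda>(x,y). sc (\<epsilon> y) x) ps))"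
      using c[of ?qs] c[of ps] r(1) by simp
  qed
  finally show ?thesis .
qed


definition prodl :: "('a::ring \<times> 'a) list \<Rightarrow> ('a \<times> 'a) list \<Rightarrow> ('a \<times> 'a) list" where
  "prodl ps qs = concat (map (\<lambda>(a,b). map (\<lambda>(c,d). (a*c, b*d)) qs) ps)"

lemma sl_concat: "sum_list (concat xss) = sum_list (map sum_list xss)"
  by (induct xss) auto

lemma sl_swap: fixes f :: "_ \<Rightarrow> _ \<Rightarrow> 'c::comm_monoid_add" shows "sum_list (map (\<lambda>x. sum_list (map (f x) ys)) xs) =
   sum_list (map (\<lambda>y. sum_list (map (\<lambda>x. f x y) xs)) ys)"
proof (induct xs)
  case Nil then show ?case by (induct ys) auto
next
  case (Cons x xs)
  have "(\<Sum>y\<leftarrow>ys. f x y + (\<Sum>x\<leftarrow>xs. f x y)) = sum_list (map (f x) ys) + (\<Sum>y\<leftarrow>ys. \<Sum>x\<leftarrow>xs. f x y)"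
    using sum_list_addf[of "f x" "\<lambda>y. \<Sum>x\<leftarrow>xs. f x y" ys] by simp
  then show ?case using Cons by simp
qed

lemma prodl_eval: "lin_fun sc \<phi> \<Longrightarrow> lin_fun sc \<psi> \<Longrightarrow>
  ts2 sc (prodl ps qs) [\<phi>,\<psi>] = sum_list (map (\<lambda>(a,b). sum_list (map (\<lambda>(c,d). \<phi> (a*c) * \<psi> (b*d)) qs)) ps)"
  by (simp add: ts2_eval) (induct ps, auto simp: prodl_def case_prod_unfold comp_def)

lemma prodl_wdL:
  assumes "algebra_over sc" "ts2 sc ps = ts2 sc ps'"
  shows "ts2 sc (prodl ps qs) = ts2 sc (prodl ps' qs)"
proof (rule ts2_ext)
  fix \<phi> \<psi> assume l: "lin_fun sc \<phi>" "lin_fun sc \<psi>"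
  have k: "sum_list (map (\<lambda>(a,b). sum_list (map (\<lambda>(c,d). \<phi> (a*c) * \<psi> (b*d)) qs)) rs)
       = sum_list (map (\<lambda>(c,d). ts2 sc rs [(\<lambda>x. \<phi> (x*c)), (\<lambda>x. \<psi> (x*d))]) qs)" for rs
  proof -
    have "sum_list (map (\<lambda>(a,b). sum_list (map (\<lambda>(c,d). \<phi> (a*c) * \<psi> (b*d)) qs)) rs)
       = sum_list (map (\<lambda>cd. sum_list (map (\<lambda>ab. (case ab of (a,b) \<Rightarrow> case cd of (c,d) \<Rightarrow> \<phi> (a*c) * \<psi> (b*d))) rs)) qs)"
      using sl_swap[of "\<lambda>ab cd. (case ab of (a,b) \<Rightarrow> case cd of (c,d) \<Rightarrow> \<phi> (a*c) * \<psi> (b*d))" qs rs]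
      by (simp add: case_prod_unfold)
    also have "\<dots> = sum_list (map (\<lambda>(c,d). ts2 sc rs [(\<lambda>x. \<phi> (x*c)), (\<lambda>x. \<psi> (x*d))]) qs)"
    proof -
      have "\<And>c d. sum_list (map (\<lambda>ab. (case ab of (a,b) \<Rightarrow> \<phi> (a*c) * \<psi> (b*d))) rs)
           = ts2 sc rs [(\<lambda>x. \<phi> (x*c)), (\<lambda>x. \<psi> (x*d))]"
        using ts2_eval[OF lin_fun_comp[OF l(1) lin_mulR[OF assms(1)]] lin_fun_comp[OF l(2) lin_mulR[OF assms(1)]]]
        by (simp add: case_prod_unfold)
      then show ?thesis by (simp add: case_prod_unfold)
    qed
    finally show ?thesis .
  qed
  show "sum_list (map (\<lambda>(x,y). \<phi> x * \<psi> y) (prodl ps qs)) = sum_list (map (\<lambda>(x,y). \<phi> x * \<psi> y) (prodl ps' qs))"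
    unfolding ts2_evalc[OF l] prodl_eval[OF l] k using assms(2) by simp
qed

lemma prodl_wdR:
  assumes "algebra_over sc" "ts2 sc qs = ts2 sc qs'"
  shows "ts2 sc (prodl ps qs) = ts2 sc (prodl ps qs')"
proof (rule ts2_ext)
  fix \<phi> \<psi> assume l: "lin_fun sc \<phi>" "lin_fun sc \<psi>"
  have k: "sum_list (map (\<lambda>(a,b). sum_list (map (\<lambda>(c,d). \<phi> (a*c) * \<psi> (b*d)) rs)) ps)
       = sum_list (map (\<lambda>(a,b). ts2 sc rs [(\<lambda>x. \<phi> (a*x)), (\<lambda>x. \<psi> (b*x))]) ps)" for rs
  proof -
    have "\<And>a b. sum_list (map (\<lambda>(c,d). \<phi> (a*c) * \<psi> (b*d)) rs)
           = ts2 sc rs [(\<lambda>x. \<phi> (a*x)), (\<lambda>x. \<psi> (b*x))]"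
        using ts2_eval[OF lin_fun_comp[OF l(1) lin_mulL[OF assms(1)]] lin_fun_comp[OF l(2) lin_mulL[OF assms(1)]]]
        by (simp add: case_prod_unfold)
    then show ?thesis by (simp add: case_prod_unfold)
  qed
  show "sum_list (map (\<lambda>(x,y). \<phi> x * \<psi> y) (prodl ps qs)) = sum_list (map (\<lambda>(x,y). \<phi> x * \<psi> y) (prodl ps qs'))"
    unfolding ts2_evalc[OF l] prodl_eval[OF l] k using assms(2) by simp
qed

lemma tmul_list: "[map2 (*) as bs. as \<leftarrow> map (\<lambda>(x,y). [x,y]) ps, bs \<leftarrow> map (\<lambda>(x,y). [x,y]) qs]
   = map (\<lambda>(x,y). [x,y]) (prodl ps qs)"
  by (induct ps) (auto simp: prodl_def map_concat comp_def case_prod_unfold)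

lemma tmul_ts2:
  assumes "algebra_over sc"
  shows "tmul sc 2 (ts2 sc ps) (ts2 sc qs) = ts2 sc (prodl ps qs)"
proof -
  let ?ps = "map pr2 (rep sc 2 (ts2 sc ps))"
  let ?qs = "map pr2 (rep sc 2 (ts2 sc qs))"
  have r1: "ts2 sc ps = ts2 sc ?ps" "map (\<lambda>(x,y). [x,y]) ?ps = rep sc 2 (ts2 sc ps)" using rep2[OF ts2_T] by auto
  have r2: "ts2 sc qs = ts2 sc ?qs" "map (\<lambda>(x,y). [x,y]) ?qs = rep sc 2 (ts2 sc qs)" using rep2[OF ts2_T] by auto
  have "tmul sc 2 (ts2 sc ps) (ts2 sc qs) = ts2 sc (prodl ?ps ?qs)"
  proof -
    have "tmul sc 2 (ts2 sc ps) (ts2 sc qs) = tsum sc [map2 (*) as bs. as \<leftarrow> rep sc 2 (ts2 sc ps), bs \<leftarrow> rep sc 2 (ts2 sc qs)]"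
      by (simp only: tmul_def)
    also have "\<dots> = tsum sc [map2 (*) as bs. as \<leftarrow> map (\<lambda>(x,y). [x,y]) ?ps, bs \<leftarrow> map (\<lambda>(x,y). [x,y]) ?qs]"
      by (simp only: r1(2) r2(2))
    also have "\<dots> = ts2 sc (prodl ?ps ?qs)" by (simp only: tmul_list ts2_def)
    finally show ?thesis .
  qed
  also have "\<dots> = ts2 sc (prodl ps ?qs)" using prodl_wdL[OF assms r1(1)[symmetric]] .
  also have "\<dots> = ts2 sc (prodl ps qs)" using prodl_wdR[OF assms r2(1)[symmetric]] .
  finally show ?thesis .
qed

lemma tmul_T: "algebra_over sc \<Longrightarrow> x \<in> T sc 2 \<Longrightarrow> y \<in> T sc 2 \<Longrightarrow> tmul sc 2 x y \<in> T sc 2"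
proof -
  assume a: "algebra_over sc" "x \<in> T sc 2" "y \<in> T sc 2"
  then obtain ps qs where "x = ts2 sc ps" "y = ts2 sc qs" unfolding T2_iff by blast
  then show ?thesis using tmul_ts2[OF a(1)] by simp
qed

lemma prodl_assoc: "prodl (prodl ps qs) rs = prodl ps (prodl qs rs)"
proof -
  have a: "prodl (xs @ ys) rs = prodl xs rs @ prodl ys rs" for xs ys :: "('a \<times> 'a) list"
    by (simp add: prodl_def)
  have b: "prodl (map (\<lambda>(c,d). (a*c, b*d)) qs) rs = map (\<lambda>(c,d). (a*c, b*d)) (prodl qs rs)" for a b qs
    by (induct qs) (auto simp: prodl_def mult.assoc)
  have c: "prodl ((a,b)#ps) qs = map (\<lambda>(c,d). (a*c, b*d)) qs @ prodl ps qs" for a b ps qs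
    by (simp add: prodl_def)
  show ?thesis
  proof (induct ps)
    case Nil then show ?case by (simp add: prodl_def)
  next
    case (Cons p ps) then show ?case by (cases p) (simp only: a b c)
  qed
qed

lemma tmul_assoc:
  assumes "algebra_over sc" "x \<in> T sc 2" "y \<in> T sc 2" "z \<in> T sc 2"
  shows "tmul sc 2 (tmul sc 2 x y) z = tmul sc 2 x (tmul sc 2 y z)"
proof -
  obtain ps qs rs where "x = ts2 sc ps" "y = ts2 sc qs" "z = ts2 sc rs" using assms unfolding T2_iff by blast
  then show ?thesis by (simp add: tmul_ts2[OF assms(1)] prodl_assoc)
qed

lemma prodl_single_R: "prodl ps [(c,d)] = map (\<lambda>(a,b). (a*c, b*d)) ps"
  by (induct ps) (auto simp: prodl_def)
lemma prodl_single_L: "prodl [(c,d)] qs = map (\<lambda>(a,b). (c*a, d*b)) qs"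
  by (simp add: prodl_def case_prod_unfold)


lemma sl_mulR: "(sum_list (map f xs)) * (c::'a::ring) = sum_list (map (\<lambda>x. f x * c) xs)"
  by (induct xs) (auto simp: distrib_right)
lemma sl_mulL: "(c::'a::ring) * (sum_list (map f xs)) = sum_list (map (\<lambda>x. c * f x) xs)"
  by (induct xs) (auto simp: distrib_left)

lemma scR: "algebra_over sc \<Longrightarrow> sc k a * c = sc k (a * c)"
  unfolding algebra_over_def by metis
lemma scL: "algebra_over sc \<Longrightarrow> c * sc k a = sc k (c * a)"
  unfolding algebra_over_def by metis

lemma core_R:
  fixes sc :: "'k::field \<Rightarrow> 'a::ring \<Rightarrow> 'a"
  assumes alg: "algebra_over sc" and nd: "\<forall>b::'a. (\<forall>a. b * a = 0) \<longrightarrow> b = 0"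
    and h: "\<And>c d \<phi> \<psi>. lin_fun sc \<phi> \<Longrightarrow> lin_fun sc \<psi> \<Longrightarrow>
        sum_list (map (\<lambda>(a,b). \<phi> (a*c) * \<psi> (b*d)) ps) = sum_list (map (\<lambda>(a,b). \<phi> (a*c) * \<psi> (b*d)) qs)"
    and l: "lin_fun sc \<phi>" "lin_fun sc \<psi>"
  shows "sum_list (map (\<lambda>(a,b). \<phi> a * \<psi> b) ps) = sum_list (map (\<lambda>(a,b). \<phi> a * \<psi> b) qs)"
proof -
  have canc: "x = y" if "\<And>c. x * c = y * c" for x y :: 'a
  proof -
    have "\<forall>c. (x - y) * c = 0" using that by (simp add: left_diff_distrib)
    then show ?thesis using nd by auto
  qed
  have step1: "sum_list (map (\<lambda>(a,b). \<phi>' a * \<psi>' (b*d)) ps) = sum_list (map (\<lambda>(a,b). \<phi>' a * \<psi>' (b*d)) qs)"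
    if l': "lin_fun sc \<phi>'" "lin_fun sc \<psi>'" for \<phi>' \<psi>' d
  proof -
    define u where "u rs = sum_list (map (\<lambda>(a,b). sc (\<psi>' (b*d)) a) rs)" for rs
    have uc: "\<phi>'' (u rs * c) = sum_list (map (\<lambda>(a,b). \<phi>'' (a*c) * \<psi>' (b*d)) rs)"
      if "lin_fun sc \<phi>''" for \<phi>'' rs c
    proof -
      have "u rs * c = sum_list (map (\<lambda>(a,b). sc (\<psi>' (b*d)) (a*c)) rs)"
        unfolding u_def sl_mulR by (simp add: case_prod_unfold scR[OF alg])
      then show ?thesis using sum_scale_lin[OF that, of "\<lambda>a b. \<psi>' (b*d)" "\<lambda>a b. a*c" rs]
        by (simp add: case_prod_unfold mult.commute)
    qed
    have "u ps = u qs"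
    proof (rule canc)
      fix c show "u ps * c = u qs * c"
        by (rule sep[OF alg]) (simp add: uc h l')
    qed
    then have "\<phi>' (u ps * 0 + u ps) = \<phi>' (u qs * 0 + u qs)" by simp
    have u1: "\<phi>' (u rs) = sum_list (map (\<lambda>(a,b). \<phi>' a * \<psi>' (b*d)) rs)" for rs
      unfolding u_def using sum_scale_lin[OF l'(1), of "\<lambda>a b. \<psi>' (b*d)" "\<lambda>a b. a" rs]
      by (simp add: case_prod_unfold mult.commute)
    show ?thesis using u1[of ps] u1[of qs] \<open>u ps = u qs\<close> by simp
  qed
  define v where "v rs = sum_list (map (\<lambda>(a,b). sc (\<phi> a) b) rs)" for rs
  have vd: "\<psi>' (v rs * d) = sum_list (map (\<lambda>(a,b). \<phi> a * \<psi>' (b*d)) rs)"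
    if "lin_fun sc \<psi>'" for \<psi>' rs d
  proof -
    have "v rs * d = sum_list (map (\<lambda>(a,b). sc (\<phi> a) (b*d)) rs)"
      unfolding v_def sl_mulR by (simp add: case_prod_unfold scR[OF alg])
    then show ?thesis using sum_scale_lin[OF that, of "\<lambda>a b. \<phi> a" "\<lambda>a b. b*d" rs]
      by (simp add: case_prod_unfold)
  qed
  have "v ps = v qs"
  proof (rule canc)
    fix d show "v ps * d = v qs * d"
      by (rule sep[OF alg]) (simp add: vd step1 l)
  qed
  have v1: "\<psi> (v rs) = sum_list (map (\<lambda>(a,b). \<phi> a * \<psi> b) rs)" for rs
    unfolding v_def using sum_scale_lin[OF l(2), of "\<lambda>a b. \<phi> a" "\<lambda>a b. b" rs]
    by (simp add: case_prod_unfold)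
  show ?thesis using v1[of ps] v1[of qs] \<open>v ps = v qs\<close> by simp
qed

lemma core_L:
  fixes sc :: "'k::field \<Rightarrow> 'a::ring \<Rightarrow> 'a"
  assumes alg: "algebra_over sc" and nd: "\<forall>b::'a. (\<forall>a. a * b = 0) \<longrightarrow> b = 0"
    and h: "\<And>c d \<phi> \<psi>. lin_fun sc \<phi> \<Longrightarrow> lin_fun sc \<psi> \<Longrightarrow>
        sum_list (map (\<lambda>(a,b). \<phi> (c*a) * \<psi> (d*b)) ps) = sum_list (map (\<lambda>(a,b). \<phi> (c*a) * \<psi> (d*b)) qs)"
    and l: "lin_fun sc \<phi>" "lin_fun sc \<psi>"
  shows "sum_list (map (\<lambda>(a,b). \<phi> a * \<psi> b) ps) = sum_list (map (\<lambda>(a,b). \<phi> a * \<psi> b) qs)"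
proof -
  have canc: "x = y" if "\<And>c. c * x = c * y" for x y :: 'a
  proof -
    have "\<forall>c. c * (x - y) = 0" using that by (simp add: right_diff_distrib)
    then show ?thesis using nd by auto
  qed
  have step1: "sum_list (map (\<lambda>(a,b). \<phi>' a * \<psi>' (d*b)) ps) = sum_list (map (\<lambda>(a,b). \<phi>' a * \<psi>' (d*b)) qs)"
    if l': "lin_fun sc \<phi>'" "lin_fun sc \<psi>'" for \<phi>' \<psi>' d
  proof -
    define u where "u rs = sum_list (map (\<lambda>(a,b). sc (\<psi>' (d*b)) a) rs)" for rs
    have uc: "\<phi>'' (c * u rs) = sum_list (map (\<lambda>(a,b). \<phi>'' (c*a) * \<psi>' (d*b)) rs)"
      if "lin_fun sc \<phi>''" for \<phi>'' rs c
    proof -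
      have "c * u rs = sum_list (map (\<lambda>(a,b). sc (\<psi>' (d*b)) (c*a)) rs)"
        unfolding u_def sl_mulL by (simp add: case_prod_unfold scL[OF alg])
      then show ?thesis using sum_scale_lin[OF that, of "\<lambda>a b. \<psi>' (d*b)" "\<lambda>a b. c*a" rs]
        by (simp add: case_prod_unfold mult.commute)
    qed
    have "u ps = u qs"
    proof (rule canc)
      fix c show "c * u ps = c * u qs"
        by (rule sep[OF alg]) (simp add: uc h l')
    qed
    have u1: "\<phi>' (u rs) = sum_list (map (\<lambda>(a,b). \<phi>' a * \<psi>' (d*b)) rs)" for rs
      unfolding u_def using sum_scale_lin[OF l'(1), of "\<lambda>a b. \<psi>' (d*b)" "\<lambda>a b. a" rs]
      by (simp add: case_prod_unfold mult.commute)
    show ?thesis using u1[of ps] u1[of qs] \<open>u ps = u qs\<close> by simp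
  qed
  define v where "v rs = sum_list (map (\<lambda>(a,b). sc (\<phi> a) b) rs)" for rs
  have vd: "\<psi>' (d * v rs) = sum_list (map (\<lambda>(a,b). \<phi> a * \<psi>' (d*b)) rs)"
    if "lin_fun sc \<psi>'" for \<psi>' rs d
  proof -
    have "d * v rs = sum_list (map (\<lambda>(a,b). sc (\<phi> a) (d*b)) rs)"
      unfolding v_def sl_mulL by (simp add: case_prod_unfold scL[OF alg])
    then show ?thesis using sum_scale_lin[OF that, of "\<lambda>a b. \<phi> a" "\<lambda>a b. d*b" rs]
      by (simp add: case_prod_unfold)
  qed
  have "v ps = v qs"
  proof (rule canc)
    fix d show "d * v ps = d * v qs"
      by (rule sep[OF alg]) (simp add: vd step1 l)
  qed
  have v1: "\<psi> (v rs) = sum_list (map (\<lambda>(a,b). \<phi> a * \<psi> b) rs)" for rs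
    unfolding v_def using sum_scale_lin[OF l(2), of "\<lambda>a b. \<phi> a" "\<lambda>a b. b" rs]
    by (simp add: case_prod_unfold)
  show ?thesis using v1[of ps] v1[of qs] \<open>v ps = v qs\<close> by simp
qed

lemma tmul_etensR: "algebra_over sc \<Longrightarrow>
  tmul sc 2 (ts2 sc ps) (etens sc [c,d]) = ts2 sc (map (\<lambda>(a,b). (a*c, b*d)) ps)"
  by (simp add: etens2 tmul_ts2 prodl_single_R)
lemma tmul_etensL: "algebra_over sc \<Longrightarrow>
  tmul sc 2 (etens sc [c,d]) (ts2 sc ps) = ts2 sc (map (\<lambda>(a,b). (c*a, d*b)) ps)"
  by (simp add: etens2 tmul_ts2 prodl_single_L)

lemma sl_map_pair: "sum_list (map (\<lambda>(x,y). F x y) (map (\<lambda>(a,b). (f a, g b)) ps)) = sum_list (map (\<lambda>(a,b). F (f a) (g b)) ps)"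
  by (induct ps) auto

lemma ndR_T:
  fixes sc :: "'k::field \<Rightarrow> 'a::ring \<Rightarrow> 'a"
  assumes alg: "algebra_over sc" and nd: "\<forall>b::'a. (\<forall>a. b * a = 0) \<longrightarrow> b = 0"
    and st: "s \<in> T sc 2" "t \<in> T sc 2"
    and h: "\<And>c d. tmul sc 2 s (etens sc [c,d]) = tmul sc 2 t (etens sc [c,d])"
  shows "s = t"
proof -
  obtain ps qs where pq: "s = ts2 sc ps" "t = ts2 sc qs" using st unfolding T2_iff by blast
  have h2: "ts2 sc (map (\<lambda>(a,b). (a*c, b*d)) ps) = ts2 sc (map (\<lambda>(a,b). (a*c, b*d)) qs)" for c d
    using h[of c d] by (simp add: pq tmul_etensR[OF alg])
  show ?thesis unfolding pq
  proof (rule ts2_ext, rule core_R[OF alg nd])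
    fix c d \<phi> \<psi> assume l: "lin_fun sc \<phi>" "lin_fun sc \<psi>"
    show "sum_list (map (\<lambda>(a,b). \<phi> (a*c) * \<psi> (b*d)) ps) = sum_list (map (\<lambda>(a,b). \<phi> (a*c) * \<psi> (b*d)) qs)"
      using arg_cong[OF h2[of c d], of "\<lambda>f. f [\<phi>,\<psi>]"] unfolding ts2_eval[OF l] sl_map_pair .
  qed
qed

lemma ndL_T:
  fixes sc :: "'k::field \<Rightarrow> 'a::ring \<Rightarrow> 'a"
  assumes alg: "algebra_over sc" and nd: "\<forall>b::'a. (\<forall>a. a * b = 0) \<longrightarrow> b = 0"
    and st: "s \<in> T sc 2" "t \<in> T sc 2"
    and h: "\<And>c d. tmul sc 2 (etens sc [c,d]) s = tmul sc 2 (etens sc [c,d]) t"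
  shows "s = t"
proof -
  obtain ps qs where pq: "s = ts2 sc ps" "t = ts2 sc qs" using st unfolding T2_iff by blast
  have h2: "ts2 sc (map (\<lambda>(a,b). (c*a, d*b)) ps) = ts2 sc (map (\<lambda>(a,b). (c*a, d*b)) qs)" for c d
    using h[of c d] by (simp add: pq tmul_etensL[OF alg])
  show ?thesis unfolding pq
  proof (rule ts2_ext, rule core_L[OF alg nd])
    fix c d \<phi> \<psi> assume l: "lin_fun sc \<phi>" "lin_fun sc \<psi>"
    show "sum_list (map (\<lambda>(a,b). \<phi> (c*a) * \<psi> (d*b)) ps) = sum_list (map (\<lambda>(a,b). \<phi> (c*a) * \<psi> (d*b)) qs)"
      using arg_cong[OF h2[of c d], of "\<lambda>f. f [\<phi>,\<psi>]"] unfolding ts2_eval[OF l] sl_map_pair .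
  qed
qed


lemma T2_add: "x \<in> T sc 2 \<Longrightarrow> y \<in> T sc 2 \<Longrightarrow> x + y \<in> T sc 2"
proof -
  assume "x \<in> T sc 2" "y \<in> T sc 2"
  then obtain ps qs where "x = ts2 sc ps" "y = ts2 sc qs" unfolding T2_iff by blast
  then have "x + y = ts2 sc (ps @ qs)" by (simp add: ts2_append)
  then show ?thesis by simp
qed
lemma T2_0: "0 \<in> T sc 2" using ts2_T[of sc "[]"] by (simp add: ts2_Nil)
lemma T2_scale: "algebra_over sc \<Longrightarrow> x \<in> T sc 2 \<Longrightarrow> tscale c x \<in> T sc 2"
proof -
  assume a: "algebra_over sc" "x \<in> T sc 2"
  then obtain ps where "x = ts2 sc ps" unfolding T2_iff by blast
  then show ?thesis by (simp add: tscale_ts2[OF a(1)])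
qed
lemma T2_etens: "etens sc [x,y] \<in> T sc 2" by (simp add: etens2)

lemma tscale1: "tscale 1 x = x" by (simp add: tscale_def)

lemma M_T: "m \<in> M sc 2 \<Longrightarrow> x \<in> T sc 2 \<Longrightarrow> fst m x \<in> T sc 2 \<and> snd m x \<in> T sc 2"
  unfolding M_def by auto

lemma M_add: "m \<in> M sc 2 \<Longrightarrow> x \<in> T sc 2 \<Longrightarrow> y \<in> T sc 2 \<Longrightarrow>
   fst m (x + y) = fst m x + fst m y \<and> snd m (x + y) = snd m x + snd m y"
proof -
  assume a: "m \<in> M sc 2" "x \<in> T sc 2" "y \<in> T sc 2"
  obtain L R where m: "m = (L,R)" by (cases m)
  have "L (tscale 1 x + y) = tscale 1 (L x) + L y \<and> R (tscale 1 x + y) = tscale 1 (R x) + R y"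
    using a unfolding M_def m by blast
  then show ?thesis using m by (simp add: tscale1)
qed

lemma M_scale: "m \<in> M sc 2 \<Longrightarrow> x \<in> T sc 2 \<Longrightarrow>
   fst m (tscale c x) = tscale c (fst m x) \<and> snd m (tscale c x) = tscale c (snd m x)"
proof -
  assume a: "m \<in> M sc 2" "x \<in> T sc 2"
  obtain L R where m: "m = (L,R)" by (cases m)
  have "L (tscale c x + 0) = tscale c (L x) + L 0 \<and> R (tscale c x + 0) = tscale c (R x) + R 0"
    using a T2_0 unfolding M_def m by blast
  moreover have "L 0 = 0 \<and> R 0 = 0"
  proof -
    have "L (0 + 0) = L 0 + L 0" "R (0+0) = R 0 + R 0" using M_add[OF a(1) T2_0 T2_0] m by auto
    then show ?thesis by simp
  qed
  ultimately show ?thesis using m by simp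
qed

lemma M_0: "m \<in> M sc 2 \<Longrightarrow> fst m 0 = 0 \<and> snd m 0 = 0"
proof -
  assume a: "m \<in> M sc 2"
  have "fst m (0 + 0) = fst m 0 + fst m 0" "snd m (0+0) = snd m 0 + snd m 0" using M_add[OF a T2_0 T2_0] by auto
  then show ?thesis by simp
qed

lemma M_mult: "m \<in> M sc 2 \<Longrightarrow> x \<in> T sc 2 \<Longrightarrow> y \<in> T sc 2 \<Longrightarrow>
   tmul sc 2 x (fst m y) = tmul sc 2 (snd m x) y"
  unfolding M_def by auto

lemma MulL:
  fixes sc :: "'k::field \<Rightarrow> 'a::ring \<Rightarrow> 'a"
  assumes alg: "algebra_over sc" and nd: "\<forall>b::'a. (\<forall>a. a * b = 0) \<longrightarrow> b = 0"
    and m: "m \<in> M sc 2" and tx: "t \<in> T sc 2" "x \<in> T sc 2"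
  shows "fst m (tmul sc 2 t x) = tmul sc 2 (fst m t) x"
proof (rule ndL_T[OF alg nd])
  show "fst m (tmul sc 2 t x) \<in> T sc 2" using M_T[OF m] tmul_T[OF alg tx] by blast
  show "tmul sc 2 (fst m t) x \<in> T sc 2" using M_T[OF m] tmul_T[OF alg] tx by blast
  fix c d
  let ?z = "etens sc [c,d]"
  have z: "?z \<in> T sc 2" by (rule T2_etens)
  have "tmul sc 2 ?z (fst m (tmul sc 2 t x)) = tmul sc 2 (snd m ?z) (tmul sc 2 t x)"
    using M_mult[OF m z tmul_T[OF alg tx]] .
  also have "\<dots> = tmul sc 2 (tmul sc 2 (snd m ?z) t) x"
    using tmul_assoc[OF alg _ tx] M_T[OF m z] by simp
  also have "\<dots> = tmul sc 2 (tmul sc 2 ?z (fst m t)) x"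
    using M_mult[OF m z tx(1)] by simp
  also have "\<dots> = tmul sc 2 ?z (tmul sc 2 (fst m t) x)"
    using tmul_assoc[OF alg z _ tx(2)] M_T[OF m tx(1)] by simp
  finally show "tmul sc 2 ?z (fst m (tmul sc 2 t x)) = tmul sc 2 ?z (tmul sc 2 (fst m t) x)" .
qed

lemma MulR:
  fixes sc :: "'k::field \<Rightarrow> 'a::ring \<Rightarrow> 'a"
  assumes alg: "algebra_over sc" and nd: "\<forall>b::'a. (\<forall>a. b * a = 0) \<longrightarrow> b = 0"
    and m: "m \<in> M sc 2" and tx: "x \<in> T sc 2" "t \<in> T sc 2"
  shows "snd m (tmul sc 2 x t) = tmul sc 2 x (snd m t)"
proof (rule ndR_T[OF alg nd])
  show "snd m (tmul sc 2 x t) \<in> T sc 2" using M_T[OF m] tmul_T[OF alg tx] by blast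
  show "tmul sc 2 x (snd m t) \<in> T sc 2" using M_T[OF m] tmul_T[OF alg] tx by blast
  fix c d
  let ?z = "etens sc [c,d]"
  have z: "?z \<in> T sc 2" by (rule T2_etens)
  have "tmul sc 2 (snd m (tmul sc 2 x t)) ?z = tmul sc 2 (tmul sc 2 x t) (fst m ?z)"
    using M_mult[OF m tmul_T[OF alg tx] z] by simp
  also have "\<dots> = tmul sc 2 x (tmul sc 2 t (fst m ?z))"
    using tmul_assoc[OF alg tx] M_T[OF m z] by simp
  also have "\<dots> = tmul sc 2 x (tmul sc 2 (snd m t) ?z)"
    using M_mult[OF m tx(2) z] by simp
  also have "\<dots> = tmul sc 2 (tmul sc 2 x (snd m t)) ?z"
    using tmul_assoc[OF alg tx(1) _ z] M_T[OF m tx(2)] by simp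
  finally show "tmul sc 2 (snd m (tmul sc 2 x t)) ?z = tmul sc 2 (tmul sc 2 x (snd m t)) ?z" .
qed

lemma emb_fst: "x \<in> T sc 2 \<Longrightarrow> fst (emb sc 2 t) x = tmul sc 2 t x"
  by (simp add: emb_def)
lemma emb_snd: "x \<in> T sc 2 \<Longrightarrow> snd (emb sc 2 t) x = tmul sc 2 x t"
  by (simp add: emb_def)
lemma mmul_fst: "x \<in> T sc 2 \<Longrightarrow> fst (mmul sc 2 m m') x = fst m (fst m' x)"
  by (simp add: mmul_def)
lemma mmul_snd: "x \<in> T sc 2 \<Longrightarrow> snd (mmul sc 2 m m') x = snd m' (snd m x)"
  by (simp add: mmul_def)

lemma inT2_eq:
  fixes sc :: "'k::field \<Rightarrow> 'a::ring \<Rightarrow> 'a"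
  assumes alg: "algebra_over sc" and nd: "\<forall>b::'a. (\<forall>a. b * a = 0) \<longrightarrow> b = 0"
    and t: "t \<in> T sc 2" "emb sc 2 t = m"
  shows "inT2 sc m = t"
  unfolding inT2_def
proof (rule the_equality)
  show "t \<in> T sc 2 \<and> emb sc 2 t = m" using t by simp
  fix s assume s: "s \<in> T sc 2 \<and> emb sc 2 s = m"
  show "s = t"
  proof (rule ndR_T[OF alg nd])
    show "s \<in> T sc 2" "t \<in> T sc 2" using s t by auto
    fix c d
    show "tmul sc 2 s (etens sc [c, d]) = tmul sc 2 t (etens sc [c, d])"
      using emb_fst[OF T2_etens[of sc c d], of s] emb_fst[OF T2_etens[of sc c d], of t] s t by simp
  qed
qed

lemma lin_pmulL: assumes "algebra_over sc" shows "Vector_Spaces.linear sc sc (pmulL p)"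
proof (cases p)
  case None
  then have "pmulL p = (\<lambda>x. x)" by (simp add: pmulL_def fun_eq_iff)
  then show ?thesis using lin_id[OF assms] by (metis)
next
  case (Some a)
  then have "pmulL p = (\<lambda>x. a * x)" by (simp add: pmulL_def fun_eq_iff)
  then show ?thesis using lin_mulL[OF assms] by (metis)
qed
lemma lin_pmulR: assumes "algebra_over sc" shows "Vector_Spaces.linear sc sc (pmulR p)"
proof (cases p)
  case None
  then have "pmulR p = (\<lambda>x. x)" by (simp add: pmulR_def fun_eq_iff)
  then show ?thesis using lin_id[OF assms] by (metis)
next
  case (Some a)
  then have "pmulR p = (\<lambda>x. x * a)" by (simp add: pmulR_def fun_eq_iff)
  then show ?thesis using lin_mulR[OF assms] by (metis)
qed

lemma map2_pm: "map (map2 f [p,q]) (map (\<lambda>(x,y). [x,y]) ps) = map (\<lambda>(x,y). [x,y]) (map (\<lambda>(x,y). (f p x, f q y)) ps)"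
  by (induct ps) auto

lemma pm_fst:
  assumes alg: "algebra_over sc"
  shows "fst (pm sc 2 [p,q]) (ts2 sc ps) = ts2 sc (map (\<lambda>(x,y). (pmulL p x, pmulL q y)) ps)"
proof -
  let ?qs = "map pr2 (rep sc 2 (ts2 sc ps))"
  have r: "ts2 sc ps = ts2 sc ?qs" "map (\<lambda>(x,y). [x,y]) ?qs = rep sc 2 (ts2 sc ps)" using rep2[OF ts2_T] by auto
  have "fst (pm sc 2 [p,q]) (ts2 sc ps) = tsum sc (map (map2 pmulL [p,q]) (rep sc 2 (ts2 sc ps)))"
    by (simp add: pm_def)
  also have "\<dots> = ts2 sc (map (\<lambda>(x,y). (pmulL p x, pmulL q y)) ?qs)"
  proof -
    have g: "\<And>qs. tsum sc (map (map2 pmulL [p,q]) (map (\<lambda>(x,y). [x,y]) qs)) = ts2 sc (map (\<lambda>(x,y). (pmulL p x, pmulL q y)) qs)"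
      by (simp only: map2_pm ts2_def)
    show ?thesis using g[of ?qs] unfolding r(2) .
  qed
  also have "\<dots> = ts2 sc (map (\<lambda>(x,y). (pmulL p x, pmulL q y)) ps)"
    using ts2_map_wd[OF lin_pmulL[OF alg] lin_pmulL[OF alg] r(1)[symmetric]] .
  finally show ?thesis .
qed

lemma pm_snd:
  assumes alg: "algebra_over sc"
  shows "snd (pm sc 2 [p,q]) (ts2 sc ps) = ts2 sc (map (\<lambda>(x,y). (pmulR p x, pmulR q y)) ps)"
proof -
  let ?qs = "map pr2 (rep sc 2 (ts2 sc ps))"
  have r: "ts2 sc ps = ts2 sc ?qs" "map (\<lambda>(x,y). [x,y]) ?qs = rep sc 2 (ts2 sc ps)" using rep2[OF ts2_T] by auto
  have "snd (pm sc 2 [p,q]) (ts2 sc ps) = tsum sc (map (map2 pmulR [p,q]) (rep sc 2 (ts2 sc ps)))"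
    by (simp add: pm_def)
  also have "\<dots> = ts2 sc (map (\<lambda>(x,y). (pmulR p x, pmulR q y)) ?qs)"
  proof -
    have g: "\<And>qs. tsum sc (map (map2 pmulR [p,q]) (map (\<lambda>(x,y). [x,y]) qs)) = ts2 sc (map (\<lambda>(x,y). (pmulR p x, pmulR q y)) qs)"
      by (simp only: map2_pm ts2_def)
    show ?thesis using g[of ?qs] unfolding r(2) .
  qed
  also have "\<dots> = ts2 sc (map (\<lambda>(x,y). (pmulR p x, pmulR q y)) ps)"
    using ts2_map_wd[OF lin_pmulR[OF alg] lin_pmulR[OF alg] r(1)[symmetric]] .
  finally show ?thesis .
qed

lemma pm_fst_et: "algebra_over sc \<Longrightarrow> fst (pm sc 2 [p,q]) (etens sc [c,d]) = etens sc [pmulL p c, pmulL q d]"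
  by (simp add: etens2 pm_fst)
lemma pm_snd_et: "algebra_over sc \<Longrightarrow> snd (pm sc 2 [p,q]) (etens sc [c,d]) = etens sc [pmulR p c, pmulR q d]"
  by (simp add: etens2 pm_snd)

lemma tspan_fix:
  assumes alg: "algebra_over sc" and m: "m \<in> M sc 2"
    and idem: "\<And>z. z \<in> T sc 2 \<Longrightarrow> f (f z) = f z"
    and fm: "f = fst m \<or> f = snd m"
    and y: "y \<in> tspan {f (etens sc [b,b']) | b b'. True}"
  shows "y \<in> T sc 2 \<and> f y = y"
proof -
  have fT: "\<And>z. z \<in> T sc 2 \<Longrightarrow> f z \<in> T sc 2" using fm M_T[OF m] by auto
  have fadd: "\<And>x z. x \<in> T sc 2 \<Longrightarrow> z \<in> T sc 2 \<Longrightarrow> f (x + z) = f x + f z" using fm M_add[OF m] by auto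
  have fsc: "\<And>x c. x \<in> T sc 2 \<Longrightarrow> f (tscale c x) = tscale c (f x)" using fm M_scale[OF m] by auto
  have f0: "f 0 = 0" using fm M_0[OF m] by auto
  obtain cs where cs: "set (map snd cs) \<subseteq> {f (etens sc [b,b']) | b b'. True}"
     "y = sum_list (map (\<lambda>(c,s). tscale c s) cs)"
    using y unfolding tspan_def by blast
  have "sum_list (map (\<lambda>(c,s). tscale c s) cs) \<in> T sc 2 \<and> f (sum_list (map (\<lambda>(c,s). tscale c s) cs)) = sum_list (map (\<lambda>(c,s). tscale c s) cs)"
    using cs(1)
  proof (induct cs)
    case Nil then show ?case using T2_0[of sc] f0 by (metis list.map(1) sum_list.Nil)
  next
    case (Cons p cs)
    obtain c s where p: "p = (c,s)" by (cases p)
    from Cons.prems p obtain b b' where s: "s = f (etens sc [b,b'])" by auto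
    have sT: "s \<in> T sc 2" using s fT T2_etens by auto
    have fs: "f s = s" using s idem T2_etens by auto
    have IH: "sum_list (map (\<lambda>(c,s). tscale c s) cs) \<in> T sc 2 \<and> f (sum_list (map (\<lambda>(c,s). tscale c s) cs)) = sum_list (map (\<lambda>(c,s). tscale c s) cs)"
      using Cons by auto
    let ?R = "sum_list (map (\<lambda>(c,s). tscale c s) cs)"
    have e: "sum_list (map (\<lambda>(c,s). tscale c s) (p#cs)) = tscale c s + ?R"
      by (simp only: p list.map(2) sum_list.Cons prod.case)
    have RT: "?R \<in> T sc 2" using IH by blast
    have fR: "f ?R = ?R" using IH by blast
    show ?case unfolding e
    proof
      show "tscale c s + ?R \<in> T sc 2" by (rule T2_add[OF T2_scale[OF alg sT] RT])
      show "f (tscale c s + ?R) = tscale c s + ?R"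
        using fadd[OF T2_scale[OF alg sT] RT] fsc[OF sT] fs fR by (simp only:)
    qed
  qed
  then show ?thesis using cs(2) by simp
qed

lemma tspan_base: "s \<in> S \<Longrightarrow> s \<in> tspan S"
  unfolding tspan_def by (intro CollectI exI[of _ "[(1,s)]"]) (simp add: tscale1)


lemma sum_GF:
  assumes FT: "\<And>z. z \<in> T sc 2 \<Longrightarrow> F z \<in> T sc 2"
    and Fadd: "\<And>x z. x \<in> T sc 2 \<Longrightarrow> z \<in> T sc 2 \<Longrightarrow> F (x + z) = F x + F z"
    and F0: "F 0 = 0"
    and Gadd: "\<And>x z. x \<in> T sc 2 \<Longrightarrow> z \<in> T sc 2 \<Longrightarrow> G (x + z) = G x + G z"
    and G0: "G 0 = 0"
  shows "sum_list (map (\<lambda>(x,y). G (F (etens sc [x,y]))) xys) = G (F (ts2 sc xys))"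
proof (induct xys)
  case Nil then show ?case by (simp only: ts2_Nil F0 G0 list.map(1) sum_list.Nil)
next
  case (Cons p xys)
  obtain x y where p: "p = (x,y)" by (cases p)
  have e: "ts2 sc (p # xys) = etens sc [x,y] + ts2 sc xys"
    using ts2_append[of sc "[(x,y)]" xys] by (simp add: p etens2)
  have "sum_list (map (\<lambda>(x,y). G (F (etens sc [x,y]))) (p # xys))
     = G (F (etens sc [x,y])) + sum_list (map (\<lambda>(x,y). G (F (etens sc [x,y]))) xys)"
    by (simp only: p list.map(2) sum_list.Cons prod.case)
  also have "\<dots> = G (F (etens sc [x,y])) + G (F (ts2 sc xys))" using Cons by (simp only:)
  also have "\<dots> = G (F (etens sc [x,y]) + F (ts2 sc xys))"
    using Gadd[OF FT[OF T2_etens] FT[OF ts2_T]] by (simp only:)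
  also have "\<dots> = G (F (ts2 sc (p # xys)))"
    using Fadd[OF T2_etens ts2_T] e by (simp only:)
  finally show ?case .
qed

lemma epsid_add:
  assumes "algebra_over sc" "lin_fun sc \<epsilon>" "x \<in> T sc 2" "z \<in> T sc 2"
  shows "epsid sc \<epsilon> (x + z) = epsid sc \<epsilon> x + epsid sc \<epsilon> z"
proof -
  obtain ps qs where "x = ts2 sc ps" "z = ts2 sc qs" using assms(3,4) unfolding T2_iff by blast
  then show ?thesis by (simp add: ts2_append[symmetric] epsid_ts2[OF assms(1,2)])
qed
lemma ideps_add:
  assumes "algebra_over sc" "lin_fun sc \<epsilon>" "x \<in> T sc 2" "z \<in> T sc 2"
  shows "ideps sc \<epsilon> (x + z) = ideps sc \<epsilon> x + ideps sc \<epsilon> z"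
proof -
  obtain ps qs where "x = ts2 sc ps" "z = ts2 sc qs" using assms(3,4) unfolding T2_iff by blast
  then show ?thesis by (simp add: ts2_append[symmetric] ideps_ts2[OF assms(1,2)])
qed
lemma epsid_0: "algebra_over sc \<Longrightarrow> lin_fun sc \<epsilon> \<Longrightarrow> epsid sc \<epsilon> 0 = 0"
  using epsid_ts2[of sc \<epsilon> "[]"] by (simp add: ts2_Nil)
lemma ideps_0: "algebra_over sc \<Longrightarrow> lin_fun sc \<epsilon> \<Longrightarrow> ideps sc \<epsilon> 0 = 0"
  using ideps_ts2[of sc \<epsilon> "[]"] by (simp add: ts2_Nil)

locale RW =
  fixes sc :: "'k::field \<Rightarrow> 'a::ring \<Rightarrow> 'a"
    and E :: "('a,'k) mlt" and \<Delta> :: "'a \<Rightarrow> ('a,'k) mlt" and \<epsilon> :: "'a \<Rightarrow> 'k"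
  assumes reg: "regular_wmba sc E \<Delta> \<epsilon>"
begin

lemma W: "wmba sc E \<Delta> \<epsilon>" using reg unfolding regular_wmba_def apply (elim conjE) by assumption

lemma alg: "algebra_over sc" using W unfolding wmba_def apply (elim conjE) by assumption
lemma nd1: "\<forall>b::'a. (\<forall>a. a * b = 0) \<longrightarrow> b = 0" using W unfolding wmba_def apply (elim conjE) by assumption
lemma nd2: "\<forall>b::'a. (\<forall>a. b * a = 0) \<longrightarrow> b = 0" using W unfolding wmba_def apply (elim conjE) by assumption
lemma EM: "E \<in> M sc 2" using W unfolding wmba_def apply (elim conjE) by assumption
lemma EE: "mmul sc 2 E E = E" using W unfolding wmba_def apply (elim conjE) by assumption
lemma DM: "\<Delta> a \<in> M sc 2" using W unfolding wmba_def apply (elim conjE) by blast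
lemma lineps: "lin_fun sc \<epsilon>"
proof (rule lin_eps[OF alg])
  show "\<forall>c a b. \<epsilon> (sc c a + b) = c * \<epsilon> a + \<epsilon> b" using W unfolding wmba_def apply (elim conjE) by assumption
qed
lemma i1: "\<forall>a b. \<exists>t\<in>T sc 2. emb sc 2 t = mmul sc 2 (\<Delta> a) (pm sc 2 [None, Some b])"
  using W unfolding wmba_def apply (elim conjE) by assumption
lemma i2: "\<forall>a b. \<exists>t\<in>T sc 2. emb sc 2 t = mmul sc 2 (pm sc 2 [Some a, None]) (\<Delta> b)"
  using W unfolding wmba_def apply (elim conjE) by assumption
lemma iii1': "\<forall>a b. epsid sc \<epsilon> (T1 sc \<Delta> a b) = a * b" using W unfolding wmba_def apply (elim conjE) by assumption
lemma iii1: "epsid sc \<epsilon> (T1 sc \<Delta> a b) = a * b" using iii1' by blast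
lemma iii2': "\<forall>a b. ideps sc \<epsilon> (T2 sc \<Delta> a b) = a * b" using W unfolding wmba_def apply (elim conjE) by assumption
lemma iii2: "ideps sc \<epsilon> (T2 sc \<Delta> a b) = a * b" using iii2' by blast
lemma iv1: "tspan {fst (\<Delta> a) (etens sc [b, b']) | a b b'. True} = tspan {fst E (etens sc [b, b']) | b b'. True}"
  using W unfolding wmba_def apply (elim conjE) by assumption
lemma iv2: "tspan {snd (\<Delta> a) (etens sc [b, b']) | a b b'. True} = tspan {snd E (etens sc [b, b']) | b b'. True}"
  using W unfolding wmba_def apply (elim conjE) by assumption
lemma r3: "\<forall>a b. \<exists>t\<in>T sc 2. emb sc 2 t = mmul sc 2 (pm sc 2 [None, Some b]) (\<Delta> a)"
  using reg unfolding regular_wmba_def apply (elim conjE) by assumption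
lemma r4: "\<forall>a b. \<exists>t\<in>T sc 2. emb sc 2 t = mmul sc 2 (\<Delta> b) (pm sc 2 [Some a, None])"
  using reg unfolding regular_wmba_def apply (elim conjE) by assumption

lemma Eidem: "z \<in> T sc 2 \<Longrightarrow> fst E (fst E z) = fst E z \<and> snd E (snd E z) = snd E z"
  using mmul_fst[of z sc E E] mmul_snd[of z sc E E] EE by simp

lemma FIXL:
  assumes t: "t \<in> T sc 2" and h: "\<And>c d. tmul sc 2 t (etens sc [c,d]) \<in> tspan {fst E (etens sc [b, b']) | b b'. True}"
  shows "fst E t = t"
proof (rule ndR_T[OF alg nd2])
  show "fst E t \<in> T sc 2" using M_T[OF EM t] by blast
  show "t \<in> T sc 2" by fact
  fix c d
  have "tmul sc 2 (fst E t) (etens sc [c,d]) = fst E (tmul sc 2 t (etens sc [c,d]))"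
    using MulL[OF alg nd1 EM t T2_etens] by simp
  also have "\<dots> = tmul sc 2 t (etens sc [c,d])"
    using tspan_fix[OF alg EM _ _ h[of c d], of] Eidem by blast
  finally show "tmul sc 2 (fst E t) (etens sc [c,d]) = tmul sc 2 t (etens sc [c,d])" .
qed

lemma FIXR:
  assumes t: "t \<in> T sc 2" and h: "\<And>c d. tmul sc 2 (etens sc [c,d]) t \<in> tspan {snd E (etens sc [b, b']) | b b'. True}"
  shows "snd E t = t"
proof (rule ndL_T[OF alg nd1])
  show "snd E t \<in> T sc 2" using M_T[OF EM t] by blast
  show "t \<in> T sc 2" by fact
  fix c d
  have "tmul sc 2 (etens sc [c,d]) (snd E t) = snd E (tmul sc 2 (etens sc [c,d]) t)"
    using MulR[OF alg nd2 EM T2_etens t] by simp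
  also have "\<dots> = tmul sc 2 (etens sc [c,d]) t"
    using tspan_fix[OF alg EM _ _ h[of c d], of] Eidem by blast
  finally show "tmul sc 2 (etens sc [c,d]) (snd E t) = tmul sc 2 (etens sc [c,d]) t" .
qed

lemma sumE:
  "sum_list (map (\<lambda>(x,y). epsid sc \<epsilon> (fst E (etens sc [x,y]))) xys) = epsid sc \<epsilon> (fst E (ts2 sc xys))"
  "sum_list (map (\<lambda>(x,y). epsid sc \<epsilon> (snd E (etens sc [x,y]))) xys) = epsid sc \<epsilon> (snd E (ts2 sc xys))"
  "sum_list (map (\<lambda>(x,y). ideps sc \<epsilon> (fst E (etens sc [x,y]))) xys) = ideps sc \<epsilon> (fst E (ts2 sc xys))"
  "sum_list (map (\<lambda>(x,y). ideps sc \<epsilon> (snd E (etens sc [x,y]))) xys) = ideps sc \<epsilon> (snd E (ts2 sc xys))"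
proof -
  have a: "\<And>z. z \<in> T sc 2 \<Longrightarrow> fst E z \<in> T sc 2" "\<And>z. z \<in> T sc 2 \<Longrightarrow> snd E z \<in> T sc 2"
    using M_T[OF EM] by blast+
  have b: "\<And>x z. x \<in> T sc 2 \<Longrightarrow> z \<in> T sc 2 \<Longrightarrow> fst E (x + z) = fst E x + fst E z"
     "\<And>x z. x \<in> T sc 2 \<Longrightarrow> z \<in> T sc 2 \<Longrightarrow> snd E (x + z) = snd E x + snd E z"
    using M_add[OF EM] by blast+
  have c: "fst E 0 = 0" "snd E 0 = 0" using M_0[OF EM] by blast+
  note d = epsid_add[OF alg lineps] ideps_add[OF alg lineps] epsid_0[OF alg lineps] ideps_0[OF alg lineps]
  show "sum_list (map (\<lambda>(x,y). epsid sc \<epsilon> (fst E (etens sc [x,y]))) xys) = epsid sc \<epsilon> (fst E (ts2 sc xys))"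
    by (rule sum_GF[OF a(1) b(1) c(1) d(1) d(3)])
  show "sum_list (map (\<lambda>(x,y). epsid sc \<epsilon> (snd E (etens sc [x,y]))) xys) = epsid sc \<epsilon> (snd E (ts2 sc xys))"
    by (rule sum_GF[OF a(2) b(2) c(2) d(1) d(3)])
  show "sum_list (map (\<lambda>(x,y). ideps sc \<epsilon> (fst E (etens sc [x,y]))) xys) = ideps sc \<epsilon> (fst E (ts2 sc xys))"
    by (rule sum_GF[OF a(1) b(1) c(1) d(2) d(4)])
  show "sum_list (map (\<lambda>(x,y). ideps sc \<epsilon> (snd E (etens sc [x,y]))) xys) = ideps sc \<epsilon> (snd E (ts2 sc xys))"
    by (rule sum_GF[OF a(2) b(2) c(2) d(2) d(4)])
qed

lemma T1_prop: "T1 sc \<Delta> a b \<in> T sc 2 \<and> emb sc 2 (T1 sc \<Delta> a b) = mmul sc 2 (\<Delta> a) (pm sc 2 [None, Some b])"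
proof -
  obtain t where t: "t \<in> T sc 2" "emb sc 2 t = mmul sc 2 (\<Delta> a) (pm sc 2 [None, Some b])" using i1 by blast
  have "T1 sc \<Delta> a b = t" unfolding T1_def by (rule inT2_eq[OF alg nd2 t])
  then show ?thesis using t by simp
qed
lemma T2_prop: "T2 sc \<Delta> a b \<in> T sc 2 \<and> emb sc 2 (T2 sc \<Delta> a b) = mmul sc 2 (pm sc 2 [Some a, None]) (\<Delta> b)"
proof -
  obtain t where t: "t \<in> T sc 2" "emb sc 2 t = mmul sc 2 (pm sc 2 [Some a, None]) (\<Delta> b)" using i2 by blast
  have "T2 sc \<Delta> a b = t" unfolding T2_def by (rule inT2_eq[OF alg nd2 t])
  then show ?thesis using t by simp
qed
lemma T3_prop: "T3 sc \<Delta> a b \<in> T sc 2 \<and> emb sc 2 (T3 sc \<Delta> a b) = mmul sc 2 (pm sc 2 [None, Some b]) (\<Delta> a)"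
proof -
  obtain t where t: "t \<in> T sc 2" "emb sc 2 t = mmul sc 2 (pm sc 2 [None, Some b]) (\<Delta> a)" using r3 by blast
  have "T3 sc \<Delta> a b = t" unfolding T3_def by (rule inT2_eq[OF alg nd2 t])
  then show ?thesis using t by simp
qed
lemma T4_prop: "T4 sc \<Delta> a b \<in> T sc 2 \<and> emb sc 2 (T4 sc \<Delta> a b) = mmul sc 2 (\<Delta> b) (pm sc 2 [Some a, None])"
proof -
  obtain t where t: "t \<in> T sc 2" "emb sc 2 t = mmul sc 2 (\<Delta> b) (pm sc 2 [Some a, None])" using r4 by blast
  have "T4 sc \<Delta> a b = t" unfolding T4_def by (rule inT2_eq[OF alg nd2 t])
  then show ?thesis using t by simp
qed

lemma span1: "fst (\<Delta> a) (etens sc [c,d]) \<in> tspan {fst E (etens sc [b, b']) | b b'. True}"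
  unfolding iv1[symmetric] by (rule tspan_base) blast
lemma span2: "snd (\<Delta> a) (etens sc [c,d]) \<in> tspan {snd E (etens sc [b, b']) | b b'. True}"
  unfolding iv2[symmetric] by (rule tspan_base) blast

lemma fixT1: "fst E (T1 sc \<Delta> a b) = T1 sc \<Delta> a b"
proof (rule FIXL)
  show "T1 sc \<Delta> a b \<in> T sc 2" using T1_prop by blast
  fix c d
  have e: "emb sc 2 (T1 sc \<Delta> a b) = mmul sc 2 (\<Delta> a) (pm sc 2 [None, Some b])" using T1_prop by blast
  have "tmul sc 2 (T1 sc \<Delta> a b) (etens sc [c,d]) = fst (emb sc 2 (T1 sc \<Delta> a b)) (etens sc [c,d])"
    by (rule emb_fst[OF T2_etens, symmetric])
  also have "\<dots> = fst (mmul sc 2 (\<Delta> a) (pm sc 2 [None, Some b])) (etens sc [c,d])" using e by simp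
  also have "\<dots> = fst (\<Delta> a) (fst (pm sc 2 [None, Some b]) (etens sc [c,d]))" by (rule mmul_fst[OF T2_etens])
  also have "\<dots> = fst (\<Delta> a) (etens sc [c, b*d])" by (simp add: pm_fst_et[OF alg] pmulL_def)
  finally have "tmul sc 2 (T1 sc \<Delta> a b) (etens sc [c,d]) = fst (\<Delta> a) (etens sc [c, b*d])" .
  then show "tmul sc 2 (T1 sc \<Delta> a b) (etens sc [c,d]) \<in> tspan {fst E (etens sc [b, b']) | b b'. True}"
    using span1 by simp
qed

lemma fixT2: "snd E (T2 sc \<Delta> a b) = T2 sc \<Delta> a b"
proof (rule FIXR)
  show "T2 sc \<Delta> a b \<in> T sc 2" using T2_prop by blast
  fix c d
  have e: "emb sc 2 (T2 sc \<Delta> a b) = mmul sc 2 (pm sc 2 [Some a, None]) (\<Delta> b)" using T2_prop by blast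
  have "tmul sc 2 (etens sc [c,d]) (T2 sc \<Delta> a b) = snd (emb sc 2 (T2 sc \<Delta> a b)) (etens sc [c,d])"
    by (rule emb_snd[OF T2_etens, symmetric])
  also have "\<dots> = snd (mmul sc 2 (pm sc 2 [Some a, None]) (\<Delta> b)) (etens sc [c,d])" using e by simp
  also have "\<dots> = snd (\<Delta> b) (snd (pm sc 2 [Some a, None]) (etens sc [c,d]))" by (rule mmul_snd[OF T2_etens])
  also have "\<dots> = snd (\<Delta> b) (etens sc [c*a, d])" by (simp add: pm_snd_et[OF alg] pmulR_def)
  finally have "tmul sc 2 (etens sc [c,d]) (T2 sc \<Delta> a b) = snd (\<Delta> b) (etens sc [c*a, d])" .
  then show "tmul sc 2 (etens sc [c,d]) (T2 sc \<Delta> a b) \<in> tspan {snd E (etens sc [b, b']) | b b'. True}"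
    using span2 by simp
qed

lemma fixT3: "snd E (T3 sc \<Delta> a b) = T3 sc \<Delta> a b"
proof (rule FIXR)
  show "T3 sc \<Delta> a b \<in> T sc 2" using T3_prop by blast
  fix c d
  have e: "emb sc 2 (T3 sc \<Delta> a b) = mmul sc 2 (pm sc 2 [None, Some b]) (\<Delta> a)" using T3_prop by blast
  have "tmul sc 2 (etens sc [c,d]) (T3 sc \<Delta> a b) = snd (emb sc 2 (T3 sc \<Delta> a b)) (etens sc [c,d])"
    by (rule emb_snd[OF T2_etens, symmetric])
  also have "\<dots> = snd (mmul sc 2 (pm sc 2 [None, Some b]) (\<Delta> a)) (etens sc [c,d])" using e by simp
  also have "\<dots> = snd (\<Delta> a) (snd (pm sc 2 [None, Some b]) (etens sc [c,d]))" by (rule mmul_snd[OF T2_etens])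
  also have "\<dots> = snd (\<Delta> a) (etens sc [c, d*b])" by (simp add: pm_snd_et[OF alg] pmulR_def)
  finally have "tmul sc 2 (etens sc [c,d]) (T3 sc \<Delta> a b) = snd (\<Delta> a) (etens sc [c, d*b])" .
  then show "tmul sc 2 (etens sc [c,d]) (T3 sc \<Delta> a b) \<in> tspan {snd E (etens sc [b, b']) | b b'. True}"
    using span2 by simp
qed

lemma fixT4: "fst E (T4 sc \<Delta> a b) = T4 sc \<Delta> a b"
proof (rule FIXL)
  show "T4 sc \<Delta> a b \<in> T sc 2" using T4_prop by blast
  fix c d
  have e: "emb sc 2 (T4 sc \<Delta> a b) = mmul sc 2 (\<Delta> b) (pm sc 2 [Some a, None])" using T4_prop by blast
  have "tmul sc 2 (T4 sc \<Delta> a b) (etens sc [c,d]) = fst (emb sc 2 (T4 sc \<Delta> a b)) (etens sc [c,d])"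
    by (rule emb_fst[OF T2_etens, symmetric])
  also have "\<dots> = fst (mmul sc 2 (\<Delta> b) (pm sc 2 [Some a, None])) (etens sc [c,d])" using e by simp
  also have "\<dots> = fst (\<Delta> b) (fst (pm sc 2 [Some a, None]) (etens sc [c,d]))" by (rule mmul_fst[OF T2_etens])
  also have "\<dots> = fst (\<Delta> b) (etens sc [a*c, d])" by (simp add: pm_fst_et[OF alg] pmulL_def)
  finally have "tmul sc 2 (T4 sc \<Delta> a b) (etens sc [c,d]) = fst (\<Delta> b) (etens sc [a*c, d])" .
  then show "tmul sc 2 (T4 sc \<Delta> a b) (etens sc [c,d]) \<in> tspan {fst E (etens sc [b, b']) | b b'. True}"
    using span1 by simp
qed

lemma part3: "T1 sc \<Delta> a b = tsum sc (map (\<lambda>(x,y). [x, y]) xys) \<Longrightarrow>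
            sum_list (map (\<lambda>(x,y). fst (piL sc E \<Delta> \<epsilon> x) y) xys) = a * b"
proof -
  assume h: "T1 sc \<Delta> a b = tsum sc (map (\<lambda>(x,y). [x, y]) xys)"
  have "sum_list (map (\<lambda>(x,y). fst (piL sc E \<Delta> \<epsilon> x) y) xys) = epsid sc \<epsilon> (fst E (ts2 sc xys))"
    using sumE(1)[of xys] by (simp add: piL_def)
  also have "\<dots> = a * b" using h[symmetric] fixT1 iii1 by (simp add: ts2_def)
  finally show ?thesis .
qed

lemma part4: "T2 sc \<Delta> a b = tsum sc (map (\<lambda>(x,y). [x, y]) xys) \<Longrightarrow>
            sum_list (map (\<lambda>(x,y). snd (piR sc E \<Delta> \<epsilon> y) x) xys) = a * b"
proof -
  assume h: "T2 sc \<Delta> a b = tsum sc (map (\<lambda>(x,y). [x, y]) xys)"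
  have "sum_list (map (\<lambda>(x,y). snd (piR sc E \<Delta> \<epsilon> y) x) xys) = ideps sc \<epsilon> (snd E (ts2 sc xys))"
    using sumE(4)[of xys] by (simp add: piR_def)
  also have "\<dots> = a * b" using h[symmetric] fixT2 iii2 by (simp add: ts2_def)
  finally show ?thesis .
qed

end

context RW begin

lemma T3_mul: "tmul sc 2 (etens sc [c,d]) (T3 sc \<Delta> a b) = snd (\<Delta> a) (etens sc [c, d*b])"
proof -
  have e: "emb sc 2 (T3 sc \<Delta> a b) = mmul sc 2 (pm sc 2 [None, Some b]) (\<Delta> a)" using T3_prop by blast
  have "tmul sc 2 (etens sc [c,d]) (T3 sc \<Delta> a b) = snd (emb sc 2 (T3 sc \<Delta> a b)) (etens sc [c,d])"
    by (rule emb_snd[OF T2_etens, symmetric])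
  also have "\<dots> = snd (mmul sc 2 (pm sc 2 [None, Some b]) (\<Delta> a)) (etens sc [c,d])" using e by simp
  also have "\<dots> = snd (\<Delta> a) (snd (pm sc 2 [None, Some b]) (etens sc [c,d]))" by (rule mmul_snd[OF T2_etens])
  also have "\<dots> = snd (\<Delta> a) (etens sc [c, d*b])" by (simp add: pm_snd_et[OF alg] pmulR_def)
  finally show ?thesis .
qed

lemma T1_mulL: "tmul sc 2 (etens sc [e,g]) (T1 sc \<Delta> a c) = snd (pm sc 2 [None, Some c]) (snd (\<Delta> a) (etens sc [e,g]))"
proof -
  have e: "emb sc 2 (T1 sc \<Delta> a c) = mmul sc 2 (\<Delta> a) (pm sc 2 [None, Some c])" using T1_prop by blast
  have "tmul sc 2 (etens sc [e,g]) (T1 sc \<Delta> a c) = snd (emb sc 2 (T1 sc \<Delta> a c)) (etens sc [e,g])"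
    by (rule emb_snd[OF T2_etens, symmetric])
  also have "\<dots> = snd (mmul sc 2 (\<Delta> a) (pm sc 2 [None, Some c])) (etens sc [e,g])" using e by simp
  also have "\<dots> = snd (pm sc 2 [None, Some c]) (snd (\<Delta> a) (etens sc [e,g]))" by (rule mmul_snd[OF T2_etens])
  finally show ?thesis .
qed

lemma T4_mul: "tmul sc 2 (T4 sc \<Delta> a b) (etens sc [c,d]) = fst (\<Delta> b) (etens sc [a*c, d])"
proof -
  have e: "emb sc 2 (T4 sc \<Delta> a b) = mmul sc 2 (\<Delta> b) (pm sc 2 [Some a, None])" using T4_prop by blast
  have "tmul sc 2 (T4 sc \<Delta> a b) (etens sc [c,d]) = fst (emb sc 2 (T4 sc \<Delta> a b)) (etens sc [c,d])"
    by (rule emb_fst[OF T2_etens, symmetric])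
  also have "\<dots> = fst (mmul sc 2 (\<Delta> b) (pm sc 2 [Some a, None])) (etens sc [c,d])" using e by simp
  also have "\<dots> = fst (\<Delta> b) (fst (pm sc 2 [Some a, None]) (etens sc [c,d]))" by (rule mmul_fst[OF T2_etens])
  also have "\<dots> = fst (\<Delta> b) (etens sc [a*c, d])" by (simp add: pm_fst_et[OF alg] pmulL_def)
  finally show ?thesis .
qed

lemma T2_mulR: "tmul sc 2 (T2 sc \<Delta> c b) (etens sc [g,f]) = fst (pm sc 2 [Some c, None]) (fst (\<Delta> b) (etens sc [g,f]))"
proof -
  have e: "emb sc 2 (T2 sc \<Delta> c b) = mmul sc 2 (pm sc 2 [Some c, None]) (\<Delta> b)" using T2_prop by blast
  have "tmul sc 2 (T2 sc \<Delta> c b) (etens sc [g,f]) = fst (emb sc 2 (T2 sc \<Delta> c b)) (etens sc [g,f])"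
    by (rule emb_fst[OF T2_etens, symmetric])
  also have "\<dots> = fst (mmul sc 2 (pm sc 2 [Some c, None]) (\<Delta> b)) (etens sc [g,f])" using e by simp
  also have "\<dots> = fst (pm sc 2 [Some c, None]) (fst (\<Delta> b) (etens sc [g,f]))" by (rule mmul_fst[OF T2_etens])
  finally show ?thesis .
qed

lemma eps3: "epsid sc \<epsilon> (T3 sc \<Delta> a b) = b * a"
proof -
  obtain xs where t: "T3 sc \<Delta> a b = ts2 sc xs" using T3_prop unfolding T2_iff by blast
  have key: "epsid sc \<epsilon> (T3 sc \<Delta> a b) * c = (b * a) * c" for c
  proof -
    obtain ps1 where t1: "T1 sc \<Delta> a c = ts2 sc ps1" using T1_prop unfolding T2_iff by blast
    define r where "r = ts2 sc (map (\<lambda>(x,y). (x, b*y)) ps1)"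
    have eq: "ts2 sc (map (\<lambda>(x,y). (x, y*c)) xs) = r"
    proof (rule ndL_T[OF alg nd1])
      show "ts2 sc (map (\<lambda>(x,y). (x, y*c)) xs) \<in> T sc 2" "r \<in> T sc 2" unfolding r_def by simp_all
      fix e f
      let ?w = "snd (\<Delta> a) (etens sc [e, f*b])"
      have "tmul sc 2 (etens sc [e,f]) (ts2 sc (map (\<lambda>(x,y). (x, y*c)) xs))
          = ts2 sc (map (\<lambda>(x,y). (e*x, f*(y*c))) xs)"
        by (simp add: tmul_etensL[OF alg] case_prod_unfold comp_def)
      also have "\<dots> = snd (pm sc 2 [None, Some c]) (ts2 sc (map (\<lambda>(x,y). (e*x, f*y)) xs))"
        by (simp add: pm_snd[OF alg] pmulR_def case_prod_unfold comp_def mult.assoc)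
      also have "\<dots> = snd (pm sc 2 [None, Some c]) ?w"
        using T3_mul[of e f a b] t by (simp add: tmul_etensL[OF alg])
      also have "\<dots> = tmul sc 2 (etens sc [e, f*b]) (T1 sc \<Delta> a c)" using T1_mulL by simp
      also have "\<dots> = tmul sc 2 (etens sc [e,f]) r"
        unfolding r_def t1 by (simp add: tmul_etensL[OF alg] case_prod_unfold comp_def mult.assoc)
      finally show "tmul sc 2 (etens sc [e,f]) (ts2 sc (map (\<lambda>(x,y). (x, y*c)) xs)) = tmul sc 2 (etens sc [e,f]) r" .
    qed
    have "epsid sc \<epsilon> (T3 sc \<Delta> a b) * c = sum_list (map (\<lambda>(x,y). sc (\<epsilon> x) (y*c)) xs)"
      unfolding t epsid_ts2[OF alg lineps] sl_mulR by (simp add: case_prod_unfold scR[OF alg])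
    also have "\<dots> = epsid sc \<epsilon> (ts2 sc (map (\<lambda>(x,y). (x, y*c)) xs))"
      by (simp add: epsid_ts2[OF alg lineps] case_prod_unfold comp_def)
    also have "\<dots> = epsid sc \<epsilon> r" using eq by simp
    also have "\<dots> = b * epsid sc \<epsilon> (T1 sc \<Delta> a c)"
      unfolding r_def t1 epsid_ts2[OF alg lineps] sl_mulL
      by (simp add: case_prod_unfold comp_def scL[OF alg])
    also have "\<dots> = (b * a) * c" using iii1 by (simp add: mult.assoc)
    finally show ?thesis .
  qed
  have "\<forall>c. (epsid sc \<epsilon> (T3 sc \<Delta> a b) - b * a) * c = 0" using key by (simp add: left_diff_distrib)
  then show ?thesis using nd2 by auto
qed

lemma ideps4: "ideps sc \<epsilon> (T4 sc \<Delta> a b) = b * a"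
proof -
  obtain xs where t: "T4 sc \<Delta> a b = ts2 sc xs" using T4_prop unfolding T2_iff by blast
  have key: "c * ideps sc \<epsilon> (T4 sc \<Delta> a b) = c * (b * a)" for c
  proof -
    obtain ps2 where t2: "T2 sc \<Delta> c b = ts2 sc ps2" using T2_prop unfolding T2_iff by blast
    define r where "r = ts2 sc (map (\<lambda>(x,y). (x*a, y)) ps2)"
    have eq: "ts2 sc (map (\<lambda>(x,y). (c*x, y)) xs) = r"
    proof (rule ndR_T[OF alg nd2])
      show "ts2 sc (map (\<lambda>(x,y). (c*x, y)) xs) \<in> T sc 2" "r \<in> T sc 2" unfolding r_def by simp_all
      fix e f
      let ?w = "fst (\<Delta> b) (etens sc [a*e, f])"
      have "tmul sc 2 (ts2 sc (map (\<lambda>(x,y). (c*x, y)) xs)) (etens sc [e,f])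
          = ts2 sc (map (\<lambda>(x,y). (c*(x*e), y*f)) xs)"
        by (simp add: tmul_etensR[OF alg] case_prod_unfold comp_def mult.assoc)
      also have "\<dots> = fst (pm sc 2 [Some c, None]) (ts2 sc (map (\<lambda>(x,y). (x*e, y*f)) xs))"
        by (simp add: pm_fst[OF alg] pmulL_def case_prod_unfold comp_def)
      also have "\<dots> = fst (pm sc 2 [Some c, None]) ?w"
        using T4_mul[of a b e f] t by (simp add: tmul_etensR[OF alg])
      also have "\<dots> = tmul sc 2 (T2 sc \<Delta> c b) (etens sc [a*e, f])" using T2_mulR by simp
      also have "\<dots> = tmul sc 2 r (etens sc [e,f])"
        unfolding r_def t2 by (simp add: tmul_etensR[OF alg] case_prod_unfold comp_def mult.assoc)
      finally show "tmul sc 2 (ts2 sc (map (\<lambda>(x,y). (c*x, y)) xs)) (etens sc [e,f]) = tmul sc 2 r (etens sc [e,f])" .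
    qed
    have "c * ideps sc \<epsilon> (T4 sc \<Delta> a b) = sum_list (map (\<lambda>(x,y). sc (\<epsilon> y) (c*x)) xs)"
      unfolding t ideps_ts2[OF alg lineps] sl_mulL by (simp add: case_prod_unfold scL[OF alg])
    also have "\<dots> = ideps sc \<epsilon> (ts2 sc (map (\<lambda>(x,y). (c*x, y)) xs))"
      by (simp add: ideps_ts2[OF alg lineps] case_prod_unfold comp_def)
    also have "\<dots> = ideps sc \<epsilon> r" using eq by simp
    also have "\<dots> = ideps sc \<epsilon> (T2 sc \<Delta> c b) * a"
      unfolding r_def t2 ideps_ts2[OF alg lineps] sl_mulR
      by (simp add: case_prod_unfold comp_def scR[OF alg])
    also have "\<dots> = c * (b * a)" using iii2 by (simp add: mult.assoc)
    finally show ?thesis .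
  qed
  have "\<forall>c. c * (ideps sc \<epsilon> (T4 sc \<Delta> a b) - b * a) = 0" using key by (simp add: right_diff_distrib)
  then show ?thesis using nd1 by auto
qed

lemma part1: "T3 sc \<Delta> a b = tsum sc (map (\<lambda>(x,y). [x, y]) xys) \<Longrightarrow>
            sum_list (map (\<lambda>(x,y). snd (piLbar sc E \<Delta> \<epsilon> x) y) xys) = b * a"
proof -
  assume h: "T3 sc \<Delta> a b = tsum sc (map (\<lambda>(x,y). [x, y]) xys)"
  have "sum_list (map (\<lambda>(x,y). snd (piLbar sc E \<Delta> \<epsilon> x) y) xys) = epsid sc \<epsilon> (snd E (ts2 sc xys))"
    using sumE(2)[of xys] by (simp add: piLbar_def)
  also have "\<dots> = b * a" using h[symmetric] fixT3 eps3 by (simp add: ts2_def)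
  finally show ?thesis .
qed

lemma part2: "T4 sc \<Delta> a b = tsum sc (map (\<lambda>(x,y). [x, y]) xys) \<Longrightarrow>
            sum_list (map (\<lambda>(x,y). fst (piRbar sc E \<Delta> \<epsilon> y) x) xys) = b * a"
proof -
  assume h: "T4 sc \<Delta> a b = tsum sc (map (\<lambda>(x,y). [x, y]) xys)"
  have "sum_list (map (\<lambda>(x,y). fst (piRbar sc E \<Delta> \<epsilon> y) x) xys) = ideps sc \<epsilon> (fst E (ts2 sc xys))"
    using sumE(3)[of xys] by (simp add: piRbar_def)
  also have "\<dots> = b * a" using h[symmetric] fixT4 ideps4 by (simp add: ts2_def)
  finally show ?thesis .
qed

end

theorem lemma3p7:
  fixes sc :: "'k::field \<Rightarrow> 'a::ring \<Rightarrow> 'a"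
    and E :: "('a,'k) mlt" and \<Delta> :: "'a \<Rightarrow> ('a,'k) mlt" and \<epsilon> :: "'a \<Rightarrow> 'k"
  assumes "regular_wmba sc E \<Delta> \<epsilon>"
  shows "(\<forall>a b xys. T3 sc \<Delta> a b = tsum sc (map (\<lambda>(x,y). [x, y]) xys) \<longrightarrow>
            sum_list (map (\<lambda>(x,y). snd (piLbar sc E \<Delta> \<epsilon> x) y) xys) = b * a)
       \<and> (\<forall>a b xys. T4 sc \<Delta> a b = tsum sc (map (\<lambda>(x,y). [x, y]) xys) \<longrightarrow>
            sum_list (map (\<lambda>(x,y). fst (piRbar sc E \<Delta> \<epsilon> y) x) xys) = b * a)
       \<and> (\<forall>a b xys. T1 sc \<Delta> a b = tsum sc (map (\<lambda>(x,y). [x, y]) xys) \<longrightarrow>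
            sum_list (map (\<lambda>(x,y). fst (piL sc E \<Delta> \<epsilon> x) y) xys) = a * b)
       \<and> (\<forall>a b xys. T2 sc \<Delta> a b = tsum sc (map (\<lambda>(x,y). [x, y]) xys) \<longrightarrow>
            sum_list (map (\<lambda>(x,y). snd (piR sc E \<Delta> \<epsilon> y) x) xys) = a * b)"
proof -
  interpret RW sc E \<Delta> \<epsilon> by (unfold_locales) (rule assms)
  show ?thesis using part1 part2 part3 part4 by blast
qed

end
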